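(* Let $\Sigma$ be a finite alphabet, let $X,Y\subseteq\Sigma^{\mathbb{Z}}$ be shift spaces, and let $\mu$ be a shift-invariant ergodic Borel probability measure on $Y$. Then \[\inf\{\nu(\{\mathbf{x}_0\ne\mathbf{y}_0\}):\nu\in M_{\mathcal{E}}(X,Y,\mu)\}=\inf\{\nu(\{\mathbf{x}_0\ne\mathbf{y}_0\}):\nu\in M(X,Y,\mu)\},\] where $\{\mathbf{x}_0\ne\mathbf{y}_0\}=\{(\mathbf{x},\mathbf{y})\in X\times Y:\mathbf{x}_0\ne\mathbf{y}_0\}$.
   Context: A shift space is a closed subset of $\Sigma^{\mathbb{Z}}$ invariant under the left shift $T$. On $X\times Y$ the shift acts by $T(\mathbf{x},\mathbf{y})=(T\mathbf{x},T\mathbf{y})$. $M(X,Y,\mu)$ is the set of extensions of $\mu$: shift-invariant Borel probability measures $\nu$ on $X\times Y$ with $\nu(X\times A)=\mu(A)$ for all measurable $A\subseteq Y$. $M_{\mathcal{E}}(X,Y,\mu)$ is the subset of those extensions that are ergodic for the shift on $X\times Y$. *)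

theory Defs
  imports "HOL-Probability.Probability"
begin

definition borel_of :: "'a topology \<Rightarrow> 'a measure" where
  "borel_of T = sigma (topspace T) {U. openin T U}"

definition full_shift_top :: "'a set \<Rightarrow> (int \<Rightarrow> 'a) topology" where
  "full_shift_top \<Sigma> = product_topology (\<lambda>_. discrete_topology \<Sigma>) UNIV"

definition lshift :: "(int \<Rightarrow> 'a) \<Rightarrow> (int \<Rightarrow> 'a)" where
  "lshift x = (\<lambda>n. x (n + 1))"

definition lshift2 :: "(int \<Rightarrow> 'a) \<times> (int \<Rightarrow> 'b) \<Rightarrow> (int \<Rightarrow> 'a) \<times> (int \<Rightarrow> 'b)" where
  "lshift2 p = (lshift (fst p), lshift (snd p))"

definition shift_space :: "'a set \<Rightarrow> (int \<Rightarrow> 'a) set \<Rightarrow> bool" where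
  "shift_space \<Sigma> X \<longleftrightarrow> closedin (full_shift_top \<Sigma>) X \<and> lshift ` X = X"

definition invariant_borel_prob :: "'a topology \<Rightarrow> ('a \<Rightarrow> 'a) \<Rightarrow> 'a measure \<Rightarrow> bool" where
  "invariant_borel_prob T f M \<longleftrightarrow>
     sets M = sets (borel_of T) \<and> space M = topspace T \<and> prob_space M \<and>
     (\<forall>A\<in>sets M. emeasure M (f -` A \<inter> space M) = emeasure M A)"

definition ergodic_borel_prob :: "'a topology \<Rightarrow> ('a \<Rightarrow> 'a) \<Rightarrow> 'a measure \<Rightarrow> bool" where
  "ergodic_borel_prob T f M \<longleftrightarrow> invariant_borel_prob T f M \<and>
     (\<forall>A\<in>sets M. f -` A \<inter> space M = A \<longrightarrow> emeasure M A = 0 \<or> emeasure M A = 1)"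

definition extensions ::
  "'a set \<Rightarrow> (int \<Rightarrow> 'a) set \<Rightarrow> (int \<Rightarrow> 'a) set \<Rightarrow> (int \<Rightarrow> 'a) measure
     \<Rightarrow> ((int \<Rightarrow> 'a) \<times> (int \<Rightarrow> 'a)) measure set" where
  "extensions \<Sigma> X Y \<mu> = {\<nu>.
     invariant_borel_prob
       (prod_topology (subtopology (full_shift_top \<Sigma>) X) (subtopology (full_shift_top \<Sigma>) Y))
       lshift2 \<nu> \<and>
     (\<forall>A\<in>sets \<mu>. emeasure \<nu> (X \<times> A) = emeasure \<mu> A)}"

definition ergodic_extensions ::
  "'a set \<Rightarrow> (int \<Rightarrow> 'a) set \<Rightarrow> (int \<Rightarrow> 'a) set \<Rightarrow> (int \<Rightarrow> 'a) measure
     \<Rightarrow> ((int \<Rightarrow> 'a) \<times> (int \<Rightarrow> 'a)) measure set" where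
  "ergodic_extensions \<Sigma> X Y \<mu> = {\<nu> \<in> extensions \<Sigma> X Y \<mu>.
     ergodic_borel_prob
       (prod_topology (subtopology (full_shift_top \<Sigma>) X) (subtopology (full_shift_top \<Sigma>) Y))
       lshift2 \<nu>}"

end

theory Submission
  imports Defs "HOL-Library.Diagonal_Subsequence"
begin

definition rs :: "nat \<Rightarrow> (int \<Rightarrow> 'a) \<Rightarrow> (int \<Rightarrow> 'a)" where
  "rs n x = restrict x {- int n .. int n}"

definition rs2 :: "nat \<Rightarrow> (int \<Rightarrow> 'a) \<times> (int \<Rightarrow> 'a) \<Rightarrow> (int \<Rightarrow> 'a) \<times> (int \<Rightarrow> 'a)" where
  "rs2 n p = (rs n (fst p), rs n (snd p))"

definition gcyl :: "'p set \<Rightarrow> (nat \<Rightarrow> 'p \<Rightarrow> 'q) \<Rightarrow> 'p set set" where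
  "gcyl \<Omega> R = (\<Union>n. range (\<lambda>S. {p\<in>\<Omega>. R n p \<in> S}))"

lemma rs_eq_iff: "rs n z = rs n x \<longleftrightarrow> (\<forall>i. \<bar>i\<bar> \<le> int n \<longrightarrow> z i = x i)"
proof
  assume h: "rs n z = rs n x"
  show "\<forall>i. \<bar>i\<bar> \<le> int n \<longrightarrow> z i = x i"
  proof (intro allI impI)
    fix i assume "\<bar>i\<bar> \<le> int n"
    then have "i \<in> {- int n .. int n}" by auto
    then show "z i = x i" using fun_cong[OF h, of i] by (simp add: rs_def)
  qed
next
  assume h: "\<forall>i. \<bar>i\<bar> \<le> int n \<longrightarrow> z i = x i"
  show "rs n z = rs n x"
  proof
    fix i show "rs n z i = rs n x i"
    proof (cases "i \<in> {- int n .. int n}")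
      case True then have "\<bar>i\<bar> \<le> int n" by auto
      then show ?thesis using h True by (simp add: rs_def)
    next
      case False then show ?thesis by (simp only: rs_def restrict_def if_not_P[OF False] if_False)
    qed
  qed
qed

lemma rs_rs: "m \<le> n \<Longrightarrow> rs m (rs n z) = rs m z"
  unfolding rs_def restrict_def fun_eq_iff by auto

lemma rs2_rs2: "m \<le> n \<Longrightarrow> rs2 m p = (\<lambda>q. (rs m (fst q), rs m (snd q))) (rs2 n p)"
  unfolding rs2_def by (simp add: rs_rs)

lemma topspace_full: "topspace (full_shift_top \<Sigma>) = {x. \<forall>i. x i \<in> \<Sigma>}"
  by (auto simp: full_shift_top_def PiE_def extensional_def)

lemma gcyl_mem: "A \<in> gcyl \<Omega> R \<longleftrightarrow> (\<exists>n S. A = {p\<in>\<Omega>. R n p \<in> S})"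
  unfolding gcyl_def by auto

locale refining =
  fixes \<Omega> :: "'p set" and R :: "nat \<Rightarrow> 'p \<Rightarrow> 'q"
  assumes refine: "\<And>m n. m \<le> n \<Longrightarrow> \<exists>h. \<forall>p\<in>\<Omega>. R m p = h (R n p)"
begin

lemma lift: assumes "m \<le> n" shows "\<exists>S'. {p\<in>\<Omega>. R m p \<in> S} = {p\<in>\<Omega>. R n p \<in> S'}"
proof -
  obtain h where "\<forall>p\<in>\<Omega>. R m p = h (R n p)" using refine[OF assms] by blast
  then show ?thesis by (intro exI[of _ "h -` S"]) auto
qed

lemma two: assumes "A \<in> gcyl \<Omega> R" "B \<in> gcyl \<Omega> R"
  obtains n S T where "A = {p\<in>\<Omega>. R n p \<in> S}" "B = {p\<in>\<Omega>. R n p \<in> T}"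
proof -
  obtain m S where A: "A = {p\<in>\<Omega>. R m p \<in> S}" using assms(1) unfolding gcyl_mem by blast
  obtain n T where B: "B = {p\<in>\<Omega>. R n p \<in> T}" using assms(2) unfolding gcyl_mem by blast
  obtain S' where S': "{p\<in>\<Omega>. R m p \<in> S} = {p\<in>\<Omega>. R (max m n) p \<in> S'}" using lift[of m "max m n" S] by auto
  obtain T' where T': "{p\<in>\<Omega>. R n p \<in> T} = {p\<in>\<Omega>. R (max m n) p \<in> T'}" using lift[of n "max m n" T] by auto
  show ?thesis using that[of "max m n" S' T'] A B S' T' by simp
qed

lemma Int_mem: "A \<in> gcyl \<Omega> R \<Longrightarrow> B \<in> gcyl \<Omega> R \<Longrightarrow> A \<inter> B \<in> gcyl \<Omega> R"
proof -
  assume a: "A \<in> gcyl \<Omega> R" and b: "B \<in> gcyl \<Omega> R"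
  obtain n S T where "A = {p\<in>\<Omega>. R n p \<in> S}" "B = {p\<in>\<Omega>. R n p \<in> T}" by (rule two[OF a b])
  then have eq: "A \<inter> B = {p\<in>\<Omega>. R n p \<in> S \<inter> T}" by auto
  show ?thesis unfolding gcyl_mem by (rule exI[of _ n], rule exI[of _ "S \<inter> T"], rule eq)
qed

lemma Un_mem: "A \<in> gcyl \<Omega> R \<Longrightarrow> B \<in> gcyl \<Omega> R \<Longrightarrow> A \<union> B \<in> gcyl \<Omega> R"
proof -
  assume a: "A \<in> gcyl \<Omega> R" and b: "B \<in> gcyl \<Omega> R"
  obtain n S T where "A = {p\<in>\<Omega>. R n p \<in> S}" "B = {p\<in>\<Omega>. R n p \<in> T}" by (rule two[OF a b])
  then have eq: "A \<union> B = {p\<in>\<Omega>. R n p \<in> S \<union> T}" by auto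
  show ?thesis unfolding gcyl_mem by (rule exI[of _ n], rule exI[of _ "S \<union> T"], rule eq)
qed

lemma Diff_mem: "A \<in> gcyl \<Omega> R \<Longrightarrow> B \<in> gcyl \<Omega> R \<Longrightarrow> A - B \<in> gcyl \<Omega> R"
proof -
  assume a: "A \<in> gcyl \<Omega> R" and b: "B \<in> gcyl \<Omega> R"
  obtain n S T where "A = {p\<in>\<Omega>. R n p \<in> S}" "B = {p\<in>\<Omega>. R n p \<in> T}" by (rule two[OF a b])
  then have eq: "A - B = {p\<in>\<Omega>. R n p \<in> S - T}" by auto
  show ?thesis unfolding gcyl_mem by (rule exI[of _ n], rule exI[of _ "S - T"], rule eq)
qed

lemma top_mem: "\<Omega> \<in> gcyl \<Omega> R"
  unfolding gcyl_mem by (intro exI[of _ 0] exI[of _ UNIV]) auto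

lemma empty_mem: "{} \<in> gcyl \<Omega> R"
  unfolding gcyl_mem by (intro exI[of _ 0] exI[of _ "{}"]) auto

lemma sub_Pow: "gcyl \<Omega> R \<subseteq> Pow \<Omega>"
  unfolding gcyl_def by auto

lemma ring: "ring_of_sets \<Omega> (gcyl \<Omega> R)"
  unfolding ring_of_sets_iff using sub_Pow empty_mem Un_mem Diff_mem by blast

lemma algebra: "algebra \<Omega> (gcyl \<Omega> R)"
  unfolding algebra_iff_Un using sub_Pow empty_mem Un_mem Diff_mem top_mem by blast

lemma Int_stable: "Int_stable (gcyl \<Omega> R)"
  unfolding Int_stable_def using Int_mem by blast

end

lemma gcyl_countable:
  assumes "\<And>n. finite (R n ` \<Omega>)"
  shows "countable (gcyl \<Omega> R)"
proof -
  have "range (\<lambda>S. {p\<in>\<Omega>. R n p \<in> S}) \<subseteq> (\<lambda>S. {p\<in>\<Omega>. R n p \<in> S}) ` Pow (R n ` \<Omega>)" for n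
  proof
    fix A assume "A \<in> range (\<lambda>S. {p\<in>\<Omega>. R n p \<in> S})"
    then obtain S where "A = {p\<in>\<Omega>. R n p \<in> S}" by auto
    then have eq: "A = {p\<in>\<Omega>. R n p \<in> S \<inter> R n ` \<Omega>}" by auto
    show "A \<in> (\<lambda>S. {p\<in>\<Omega>. R n p \<in> S}) ` Pow (R n ` \<Omega>)"
      by (rule image_eqI[of _ _ "S \<inter> R n ` \<Omega>"]) (use eq in auto)
  qed
  then have "finite (range (\<lambda>S. {p\<in>\<Omega>. R n p \<in> S}))" for n
    by (rule finite_subset) (simp add: assms)
  then show ?thesis unfolding gcyl_def by (intro countable_UN) (auto intro: countable_finite)
qed

lemma refining_rs: "refining Z rs"
proof unfold_locales
  fix m n :: nat assume "m \<le> n"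
  then show "\<exists>h. \<forall>p\<in>Z. rs m p = h (rs n p)" by (intro exI[of _ "rs m"]) (simp add: rs_rs)
qed

lemma refining_rs2: "refining Z rs2"
proof unfold_locales
  fix m n :: nat assume "m \<le> n"
  then show "\<exists>h. \<forall>p\<in>Z. rs2 m p = h (rs2 n p)"
    by (intro exI[of _ "\<lambda>q. (rs m (fst q), rs m (snd q))"]) (simp add: rs2_rs2)
qed

lemma finite_rs:
  assumes "finite \<Sigma>" "Z \<subseteq> {x. \<forall>i. x i \<in> \<Sigma>}"
  shows "finite (rs n ` Z)"
proof -
  have "rs n ` Z \<subseteq> PiE {- int n .. int n} (\<lambda>_. \<Sigma>)"
    using assms(2) by (auto simp: rs_def)
  then show ?thesis by (rule finite_subset) (simp add: assms(1) finite_PiE)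
qed

lemma finite_rs2:
  assumes "finite \<Sigma>" "X \<subseteq> {x. \<forall>i. x i \<in> \<Sigma>}" "Y \<subseteq> {x. \<forall>i. x i \<in> \<Sigma>}"
  shows "finite (rs2 n ` (X \<times> Y))"
proof -
  have "rs2 n ` (X \<times> Y) \<subseteq> rs n ` X \<times> rs n ` Y" by (auto simp: rs2_def)
  then show ?thesis by (rule finite_subset) (simp add: finite_rs[OF assms(1,2)] finite_rs[OF assms(1,3)])
qed

definition cnb :: "nat \<Rightarrow> (int \<Rightarrow> 'a) \<Rightarrow> (int\<Rightarrow>'a) set \<Rightarrow> (int \<Rightarrow> 'a) set" where
  "cnb n x Z = {z\<in>Z. rs n z = rs n x}"

lemma openin_cnb:
  assumes "Z \<subseteq> topspace (full_shift_top \<Sigma>)" "x \<in> Z"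
  shows "openin (subtopology (full_shift_top \<Sigma>) Z) (cnb n x Z)"
proof -
  define U where "U = (\<lambda>i. if \<bar>i\<bar> \<le> int n then {x i} else \<Sigma>)"
  have xs: "x i \<in> \<Sigma>" for i using assms topspace_full[of \<Sigma>] by auto
  have "{i. U i \<noteq> \<Sigma>} \<subseteq> {- int n .. int n}" by (auto simp: U_def split: if_splits)
  then have fin: "finite {i. U i \<noteq> \<Sigma>}" by (rule finite_subset) simp
  have "openin (full_shift_top \<Sigma>) (PiE UNIV U)" unfolding full_shift_top_def
    using fin xs by (subst openin_PiE_gen) (auto simp: U_def)
  moreover have "cnb n x Z = PiE UNIV U \<inter> Z"
  proof
    show "cnb n x Z \<subseteq> PiE UNIV U \<inter> Z"
    proof
      fix z assume z: "z \<in> cnb n x Z"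
      then have "z i \<in> U i" for i using assms topspace_full[of \<Sigma>] by (auto simp: cnb_def rs_eq_iff U_def)
      then show "z \<in> PiE UNIV U \<inter> Z" using z by (auto simp: cnb_def)
    qed
    show "PiE UNIV U \<inter> Z \<subseteq> cnb n x Z"
    proof
      fix z assume z: "z \<in> PiE UNIV U \<inter> Z"
      have zU: "z i \<in> U i" for i using z by auto
      have "z i = x i" if "\<bar>i\<bar> \<le> int n" for i using zU[of i] that by (simp add: U_def)
      then show "z \<in> cnb n x Z" using z by (auto simp: cnb_def rs_eq_iff)
    qed
  qed
  ultimately show ?thesis by (auto simp: openin_subtopology)
qed

lemma open_has_cnb:
  assumes "Z \<subseteq> topspace (full_shift_top \<Sigma>)" "openin (subtopology (full_shift_top \<Sigma>) Z) U" "x \<in> U"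
  shows "\<exists>n. cnb n x Z \<subseteq> U"
proof -
  obtain V where V: "openin (full_shift_top \<Sigma>) V" "U = V \<inter> Z" using assms(2) by (auto simp: openin_subtopology)
  then obtain W where W: "finite {i. W i \<noteq> \<Sigma>}" "\<forall>i. openin (discrete_topology \<Sigma>) (W i)"
     "x \<in> PiE UNIV W" "PiE UNIV W \<subseteq> V"
  proof -
    have "\<forall>x \<in> V. \<exists>W. finite {i \<in> UNIV. W i \<noteq> topspace (discrete_topology \<Sigma>)} \<and>
                 (\<forall>i \<in> UNIV. openin (discrete_topology \<Sigma>) (W i)) \<and> x \<in> Pi\<^sub>E UNIV W \<and> Pi\<^sub>E UNIV W \<subseteq> V"
      using V(1) unfolding full_shift_top_def openin_product_topology_alt .
    moreover have "x \<in> V" using assms(3) V(2) by blast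
    ultimately obtain W where "finite {i \<in> UNIV. W i \<noteq> topspace (discrete_topology \<Sigma>)}"
      "(\<forall>i \<in> UNIV. openin (discrete_topology \<Sigma>) (W i))" "x \<in> Pi\<^sub>E UNIV W" "Pi\<^sub>E UNIV W \<subseteq> V"
      by blast
    then show ?thesis using that by simp
  qed
  define F where "F = {i. W i \<noteq> \<Sigma>}"
  define n where "n = nat (Max (insert 0 (abs ` F)))"
  have nb: "\<bar>i\<bar> \<le> int n" if "i \<in> F" for i
  proof -
    have "\<bar>i\<bar> \<le> Max (insert 0 (abs ` F))" using W(1) that unfolding F_def by (intro Max_ge) auto
    then show ?thesis unfolding n_def by linarith
  qed
  have "cnb n x Z \<subseteq> PiE UNIV W \<inter> Z"
  proof
    fix z assume z: "z \<in> cnb n x Z"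
    have "z i \<in> W i" for i
    proof (cases "i \<in> F")
      case True then show ?thesis using z nb W(3) by (auto simp: cnb_def rs_eq_iff)
    next
      case False then show ?thesis using z assms(1) topspace_full[of \<Sigma>] by (auto simp: F_def cnb_def)
    qed
    then show "z \<in> PiE UNIV W \<inter> Z" using z by (auto simp: cnb_def)
  qed
  then show ?thesis using W(4) V(2) by blast
qed

lemma cnb_mono: "m \<le> n \<Longrightarrow> cnb n x Z \<subseteq> cnb m x Z"
  unfolding cnb_def rs_eq_iff by auto

lemma cnb_self: "x \<in> Z \<Longrightarrow> x \<in> cnb n x Z"
  unfolding cnb_def by auto

lemma borel_of_generated:
  assumes C: "countable C" "\<And>c. c \<in> C \<Longrightarrow> openin T c"
    and nb: "\<And>U x. openin T U \<Longrightarrow> x \<in> U \<Longrightarrow> \<exists>c\<in>C. x \<in> c \<and> c \<subseteq> U"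
  shows "sets (borel_of T) = sigma_sets (topspace T) C"
proof -
  have "sets (borel_of T) = sigma_sets (topspace T) {U. openin T U}"
    unfolding borel_of_def by (rule sets_measure_of) (auto dest: openin_subset)
  also have "\<dots> = sigma_sets (topspace T) C"
  proof
    show "sigma_sets (topspace T) {U. openin T U} \<subseteq> sigma_sets (topspace T) C"
    proof (rule sigma_sets_mono, safe)
      fix U assume "openin T U"
      have "U = \<Union>{c\<in>C. c \<subseteq> U}"
      proof
        show "U \<subseteq> \<Union>{c\<in>C. c \<subseteq> U}"
        proof
          fix x assume "x \<in> U"
          then obtain c where "c \<in> C" "x \<in> c" "c \<subseteq> U" using nb[OF \<open>openin T U\<close>] by blast
          then show "x \<in> \<Union>{c\<in>C. c \<subseteq> U}" by blast
        qed
      qed blast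
      moreover have "\<Union>{c\<in>C. c \<subseteq> U} \<in> sigma_sets (topspace T) C"
        using C(1) by (intro sigma_sets_UNION) auto
      ultimately show "U \<in> sigma_sets (topspace T) C" by simp
    qed
    show "sigma_sets (topspace T) C \<subseteq> sigma_sets (topspace T) {U. openin T U}"
      using C(2) by (intro sigma_sets_mono') auto
  qed
  finally show ?thesis .
qed

lemma sets_borel_Y:
  assumes "finite \<Sigma>" "Z \<subseteq> topspace (full_shift_top \<Sigma>)"
  shows "sets (borel_of (subtopology (full_shift_top \<Sigma>) Z)) = sigma_sets Z (gcyl Z rs)"
proof -
  have tz: "topspace (subtopology (full_shift_top \<Sigma>) Z) = Z" using assms(2) by auto
  have "sets (borel_of (subtopology (full_shift_top \<Sigma>) Z)) =
      sigma_sets (topspace (subtopology (full_shift_top \<Sigma>) Z)) (gcyl Z rs)"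
  proof (rule borel_of_generated)
    show "countable (gcyl Z rs)" using assms topspace_full[of \<Sigma>]
      by (intro gcyl_countable finite_rs[of \<Sigma> Z]) auto
  next
    fix c assume "c \<in> gcyl Z rs"
    then obtain n S where c: "c = {p\<in>Z. rs n p \<in> S}" unfolding gcyl_mem by blast
    show "openin (subtopology (full_shift_top \<Sigma>) Z) c"
    proof (subst openin_subopen, intro ballI)
      fix x assume "x \<in> c"
      then have "cnb n x Z \<subseteq> c" "x \<in> cnb n x Z" "x \<in> Z" using c by (auto simp: cnb_def)
      then show "\<exists>T. openin (subtopology (full_shift_top \<Sigma>) Z) T \<and> x \<in> T \<and> T \<subseteq> c"
        using openin_cnb[OF assms(2) \<open>x \<in> Z\<close>, of n] by blast
    qed
  next
    fix U x assume U: "openin (subtopology (full_shift_top \<Sigma>) Z) U" "x \<in> U"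
    obtain n where n: "cnb n x Z \<subseteq> U" using open_has_cnb[OF assms(2) U] by blast
    have eq: "cnb n x Z = {p\<in>Z. rs n p \<in> {rs n x}}" by (auto simp: cnb_def)
    have "cnb n x Z \<in> gcyl Z rs" unfolding gcyl_mem by (rule exI[of _ n], rule exI[of _ "{rs n x}"], rule eq)
    moreover have "x \<in> Z" using U(2) openin_subset[OF U(1)] tz by blast
    ultimately show "\<exists>c\<in>gcyl Z rs. x \<in> c \<and> c \<subseteq> U" using n cnb_self[of x Z n] by blast
  qed
  then show ?thesis using tz by simp
qed

lemma prod_open_obtain:
  assumes "openin (prod_topology A B) W" "(x,y) \<in> W"
  obtains U1 V1 where "openin A U1" "openin B V1" "x \<in> U1" "y \<in> V1" "U1 \<times> V1 \<subseteq> W"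
proof -
  have H: "\<forall>x y. (x,y) \<in> W \<longrightarrow> (\<exists>U V. openin A U \<and> openin B V \<and> x \<in> U \<and> y \<in> V \<and> U \<times> V \<subseteq> W)"
    using assms(1) by (simp only: openin_prod_topology_alt)
  then have "\<exists>U V. openin A U \<and> openin B V \<and> x \<in> U \<and> y \<in> V \<and> U \<times> V \<subseteq> W"
    using assms(2) by simp
  then show ?thesis using that by blast
qed

lemma prod_nbhd:
  assumes "X \<subseteq> topspace (full_shift_top \<Sigma>)" "Y \<subseteq> topspace (full_shift_top \<Sigma>)"
    "openin (subtopology (full_shift_top \<Sigma>) X) U1" "openin (subtopology (full_shift_top \<Sigma>) Y) V1"
    "x \<in> U1" "y \<in> V1"
  shows "\<exists>n. cnb n x X \<times> cnb n y Y \<subseteq> U1 \<times> V1"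
proof -
  obtain n1 where n1: "cnb n1 x X \<subseteq> U1" using open_has_cnb[OF assms(1,3,5)] by blast
  obtain n2 where n2: "cnb n2 y Y \<subseteq> V1" using open_has_cnb[OF assms(2,4,6)] by blast
  have a: "cnb (max n1 n2) x X \<subseteq> U1" using cnb_mono[of n1 "max n1 n2" x X] n1 by simp
  have b: "cnb (max n1 n2) y Y \<subseteq> V1" using cnb_mono[of n2 "max n1 n2" y Y] n2 by simp
  show ?thesis using Sigma_mono[OF a b] by blast
qed

lemma cnb_prod_cyl: "cnb n x X \<times> cnb n y Y \<in> gcyl (X \<times> Y) rs2"
proof -
  have eq: "cnb n x X \<times> cnb n y Y = {q\<in>X \<times> Y. rs2 n q \<in> {(rs n x, rs n y)}}"
    unfolding cnb_def rs2_def by auto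
  show ?thesis unfolding gcyl_mem
    by (rule exI[of _ n], rule exI[of _ "{(rs n x, rs n y)}"], rule eq)
qed

lemma openin_cylP:
  assumes "X \<subseteq> topspace (full_shift_top \<Sigma>)" "Y \<subseteq> topspace (full_shift_top \<Sigma>)"
    and "c \<in> gcyl (X \<times> Y) rs2"
  shows "openin (prod_topology (subtopology (full_shift_top \<Sigma>) X) (subtopology (full_shift_top \<Sigma>) Y)) c"
proof -
  let ?T = "prod_topology (subtopology (full_shift_top \<Sigma>) X) (subtopology (full_shift_top \<Sigma>) Y)"
  obtain n S where c: "c = {p\<in>X \<times> Y. rs2 n p \<in> S}" using assms(3) unfolding gcyl_mem by blast
    show "openin ?T c"
  proof (subst openin_prod_topology_alt, intro allI impI)
    fix x y assume xyc: "(x, y) \<in> c"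
    have xy: "x \<in> X" "y \<in> Y" "rs2 n (x,y) \<in> S" using c xyc by auto
    have sub: "cnb n x X \<times> cnb n y Y \<subseteq> c"
    proof (rule subsetI)
      fix q assume q: "q \<in> cnb n x X \<times> cnb n y Y"
      then have "fst q \<in> X" "snd q \<in> Y" "rs n (fst q) = rs n x" "rs n (snd q) = rs n y"
        by (auto simp: cnb_def)
      then show "q \<in> c" using xy c by (cases q) (simp add: rs2_def)
    qed
    show "\<exists>U V. openin (subtopology (full_shift_top \<Sigma>) X) U \<and> openin (subtopology (full_shift_top \<Sigma>) Y) V \<and> x \<in> U \<and> y \<in> V \<and> U \<times> V \<subseteq> c"
      apply (rule exI[of _ "cnb n x X"], rule exI[of _ "cnb n y Y"])
      using openin_cnb[OF assms(1) xy(1), of n] openin_cnb[OF assms(2) xy(2), of n] sub cnb_self[OF xy(1)] cnb_self[OF xy(2)]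
      by simp
  qed
qed

lemma sets_borel_P:
  assumes "finite \<Sigma>" "X \<subseteq> topspace (full_shift_top \<Sigma>)" "Y \<subseteq> topspace (full_shift_top \<Sigma>)"
  shows "sets (borel_of (prod_topology (subtopology (full_shift_top \<Sigma>) X) (subtopology (full_shift_top \<Sigma>) Y)))
     = sigma_sets (X \<times> Y) (gcyl (X \<times> Y) rs2)"
proof -
  let ?T = "prod_topology (subtopology (full_shift_top \<Sigma>) X) (subtopology (full_shift_top \<Sigma>) Y)"
  have tz: "topspace ?T = X \<times> Y" using assms(2,3) by auto
  have "sets (borel_of ?T) = sigma_sets (topspace ?T) (gcyl (X \<times> Y) rs2)"
  proof (rule borel_of_generated)
    show "countable (gcyl (X \<times> Y) rs2)" using assms topspace_full[of \<Sigma>]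
      by (intro gcyl_countable finite_rs2[of \<Sigma> X Y]) auto
  next
    fix c assume "c \<in> gcyl (X \<times> Y) rs2"
    then obtain n S where c: "c = {p\<in>X \<times> Y. rs2 n p \<in> S}" unfolding gcyl_mem by blast
    show "openin ?T c"
    proof (subst openin_prod_topology_alt, intro allI impI)
      fix x y assume xyc: "(x, y) \<in> c"
      have xy: "x \<in> X" "y \<in> Y" "rs2 n (x,y) \<in> S" using c xyc by auto
      have sub: "cnb n x X \<times> cnb n y Y \<subseteq> c"
      proof (rule subsetI)
        fix q assume q: "q \<in> cnb n x X \<times> cnb n y Y"
        then have "fst q \<in> X" "snd q \<in> Y" "rs n (fst q) = rs n x" "rs n (snd q) = rs n y"
          by (auto simp: cnb_def)
        then show "q \<in> c" using xy c by (cases q) (simp add: rs2_def)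
      qed
      show "\<exists>U V. openin (subtopology (full_shift_top \<Sigma>) X) U \<and> openin (subtopology (full_shift_top \<Sigma>) Y) V \<and> x \<in> U \<and> y \<in> V \<and> U \<times> V \<subseteq> c"
        apply (rule exI[of _ "cnb n x X"], rule exI[of _ "cnb n y Y"])
        using openin_cnb[OF assms(2) xy(1), of n] openin_cnb[OF assms(3) xy(2), of n] sub cnb_self[OF xy(1)] cnb_self[OF xy(2)]
        by simp
    qed
  next
    fix U p assume U: "openin ?T U" "p \<in> U"
    obtain x y where p: "p = (x, y)" by (cases p)
    obtain U1 V1 where UV: "openin (subtopology (full_shift_top \<Sigma>) X) U1" "openin (subtopology (full_shift_top \<Sigma>) Y) V1"
      "x \<in> U1" "y \<in> V1" "U1 \<times> V1 \<subseteq> U"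
      using prod_open_obtain[OF U(1), of x y] U(2) p by blast
    obtain n where sub0: "cnb n x X \<times> cnb n y Y \<subseteq> U1 \<times> V1"
      using prod_nbhd[OF assms(2,3) UV(1-4)] by blast
    have sub: "cnb n x X \<times> cnb n y Y \<subseteq> U"
      using sub0 UV(5) by (rule order_trans)
    have xX: "x \<in> X" using UV(3) openin_imp_subset[OF UV(1)] by (rule subsetD[rotated])
    have yY: "y \<in> Y" using UV(4) openin_imp_subset[OF UV(2)] by (rule subsetD[rotated])
    have pin: "p \<in> cnb n x X \<times> cnb n y Y"
      using xX yY p by (simp add: cnb_def)
    show "\<exists>c\<in>gcyl (X \<times> Y) rs2. p \<in> c \<and> c \<subseteq> U"
      by (rule bexI[where x="cnb n x X \<times> cnb n y Y"]) (simp_all only: pin sub cnb_prod_cyl conj_absorb simp_thms)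
  qed
  then show ?thesis using tz by simp
qed

lemma ennreal_sandwich:
  fixes a b c d :: ennreal
  assumes "a \<le> b" "c \<le> d" "a + c = b + d" "b \<noteq> \<infinity>" "d \<noteq> \<infinity>"
  shows "a = b"
proof -
  have "a + c \<le> b + c" using assms(1) by (rule add_right_mono)
  also have "\<dots> \<le> b + d" using assms(2) by (rule add_left_mono)
  finally have "b + c = b + d" using assms(3) by (metis \<open>a + c \<le> b + c\<close> \<open>b + c \<le> b + d\<close> antisym)
  then have "c = d" using assms(4) by (simp add: ennreal_add_left_cancel)
  then show ?thesis using assms(3,5) by (metis add.commute ennreal_add_left_cancel)
qed

lemma ac_invariant_eq:
  fixes \<mu> \<pi> :: "'b measure" and T :: "'b \<Rightarrow> 'b" and C :: ennreal
  assumes \<mu>: "prob_space \<mu>" and \<pi>: "prob_space \<pi>" and sp: "sets \<pi> = sets \<mu>"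
    and T[measurable]: "T \<in> measurable \<mu> \<mu>"
    and inv\<mu>: "\<And>B. B \<in> sets \<mu> \<Longrightarrow> emeasure \<mu> (T -` B \<inter> space \<mu>) = emeasure \<mu> B"
    and inv\<pi>: "\<And>B. B \<in> sets \<mu> \<Longrightarrow> emeasure \<pi> (T -` B \<inter> space \<mu>) = emeasure \<pi> B"
    and erg: "\<And>B. B \<in> sets \<mu> \<Longrightarrow> T -` B \<inter> space \<mu> = B \<Longrightarrow> emeasure \<mu> B = 0 \<or> emeasure \<mu> B = 1"
    and dom: "\<And>B. B \<in> sets \<mu> \<Longrightarrow> emeasure \<pi> B \<le> C * emeasure \<mu> B"
  shows "\<pi> = \<mu>"
proof -
  interpret M: prob_space \<mu> by fact
  interpret P: prob_space \<pi> by fact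
  have spc: "space \<pi> = space \<mu>" using sets_eq_imp_space_eq[OF sp] .
  have ac: "absolutely_continuous \<mu> \<pi>"
    unfolding absolutely_continuous_def
  proof
    fix N assume N: "N \<in> null_sets \<mu>"
    then have Ns: "N \<in> sets \<mu>" "emeasure \<mu> N = 0" by auto
    then have "emeasure \<pi> N \<le> 0" using dom[of N] by simp
    then have "emeasure \<pi> N = 0" by simp
    then show "N \<in> null_sets \<pi>" using Ns(1) sp by (intro null_setsI) auto
  qed
  define h where "h = RN_deriv \<mu> \<pi>"
  have hm[measurable]: "h \<in> borel_measurable \<mu>" unfolding h_def by simp
  have dens: "density \<mu> h = \<pi>" unfolding h_def using M.density_RN_deriv[OF ac sp] .
  have piS: "emeasure \<pi> S = (\<integral>\<^sup>+ x. h x * indicator S x \<partial>\<mu>)" if "S \<in> sets \<mu>" for S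
    using emeasure_density[OF hm that] dens by simp
  define E where "E = {x\<in>space \<mu>. 1 < h x}"
  have Em[measurable]: "E \<in> sets \<mu>" unfolding E_def by measurable
  define I where "I S = (\<integral>\<^sup>+ x. (h x - 1) * indicator S x \<partial>\<mu>)" for S
  have splitS: "emeasure \<pi> S = emeasure \<mu> S + I S" if S: "S \<in> sets \<mu>" "S \<subseteq> E" for S
  proof -
    have "emeasure \<pi> S = (\<integral>\<^sup>+ x. indicator S x + (h x - 1) * indicator S x \<partial>\<mu>)"
    proof -
      have "h x * indicator S x = indicator S x + (h x - 1) * indicator S x" for x
      proof (cases "x \<in> S")
        case True
        then have "1 < h x" using S(2) unfolding E_def by auto
        then show ?thesis using True by (simp add: add_diff_inverse_ennreal[OF less_imp_le[OF \<open>1 < h x\<close>]])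
      qed simp
      then show ?thesis using piS[OF S(1)] by simp
    qed
    also have "\<dots> = emeasure \<mu> S + I S" unfolding I_def
      using S(1) by (subst nn_integral_add) auto
    finally show ?thesis .
  qed
  have Izero: "emeasure \<mu> S = 0" if S: "S \<in> sets \<mu>" "S \<subseteq> E" "I S = 0" for S
  proof -
    have "AE x in \<mu>. (h x - 1) * indicator S x = 0"
      using S(3) unfolding I_def using S(1) by (subst nn_integral_0_iff_AE[symmetric]) auto
    moreover have "(h x - 1) * indicator S x \<noteq> 0" if "x \<in> S" for x
    proof -
      have "1 < h x" using S(2) that unfolding E_def by auto
      then have "0 < h x - 1" by (rule diff_gr0_ennreal)
      then show ?thesis using that by simp
    qed
    ultimately have "AE x in \<mu>. x \<notin> S" by (auto elim: AE_mp)
    then show ?thesis using S(1) sets.sets_into_space[OF S(1)] by (subst (asm) AE_iff_measurable[of S]) auto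
  qed
  have leS: "emeasure \<pi> S \<le> emeasure \<mu> S" if S: "S \<in> sets \<mu>" and AEh: "AE x in \<mu>. x \<in> S \<longrightarrow> h x \<le> 1" for S
  proof -
    have "emeasure \<pi> S = (\<integral>\<^sup>+ x. h x * indicator S x \<partial>\<mu>)" by (rule piS[OF S])
    also have "\<dots> \<le> (\<integral>\<^sup>+ x. indicator S x \<partial>\<mu>)"
    proof (rule nn_integral_mono_AE)
      show "AE x in \<mu>. h x * indicator S x \<le> indicator S x"
        using AEh by eventually_elim (auto simp: indicator_def)
    qed
    also have "\<dots> = emeasure \<mu> S" using S by simp
    finally show ?thesis .
  qed
  define F where "F = T -` E \<inter> space \<mu>"
  have Fm[measurable]: "F \<in> sets \<mu>" unfolding F_def by measurable
  define Q where "Q = E - F"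
  define P where "P = F - E"
  have Qm[measurable]: "Q \<in> sets \<mu>" and Pm[measurable]: "P \<in> sets \<mu>" unfolding Q_def P_def by auto
  have cancel: "emeasure M P = emeasure M Q"
    if M: "finite_measure M" "sets M = sets \<mu>" "emeasure M F = emeasure M E" for M
  proof -
    interpret finite_measure M by fact
    have "emeasure M F = emeasure M (E \<inter> F) + emeasure M P"
      unfolding P_def using M(2) by (subst plus_emeasure) (auto intro!: arg_cong[where f="emeasure M"])
    moreover have "emeasure M E = emeasure M (E \<inter> F) + emeasure M Q"
      unfolding Q_def using M(2) by (subst plus_emeasure) (auto intro!: arg_cong[where f="emeasure M"])
    ultimately show ?thesis using M(3) by (simp add: ennreal_add_left_cancel)
  qed
  have muPQ: "emeasure \<mu> P = emeasure \<mu> Q"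
    by (rule cancel) (auto simp: F_def inv\<mu> M.finite_measure_axioms)
  have piPQ: "emeasure \<pi> P = emeasure \<pi> Q"
    by (rule cancel) (auto simp: F_def inv\<pi> sp P.finite_measure_axioms)
  have "emeasure \<mu> Q + I Q = emeasure \<pi> Q" using splitS[of Q] by (simp add: Q_def)
  also have "\<dots> = emeasure \<pi> P" using piPQ by simp
  also have "\<dots> \<le> emeasure \<mu> P"
    by (rule leS) (auto simp: P_def E_def)
  also have "\<dots> = emeasure \<mu> Q + 0" using muPQ by simp
  finally have "I Q \<le> 0" by (simp add: ennreal_add_left_cancel_le)
  then have Q0: "emeasure \<mu> Q = 0" by (intro Izero) (auto simp: Q_def)
  then have P0: "emeasure \<mu> P = 0" using muPQ by simp
  have AE1: "AE y in \<mu>. T y \<in> E \<longleftrightarrow> y \<in> E"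
  proof -
    have "AE y in \<mu>. y \<notin> P" using P0 Pm sets.sets_into_space[OF Pm] by (subst AE_iff_measurable[of P]) auto
    moreover have "AE y in \<mu>. y \<notin> Q" using Q0 Qm sets.sets_into_space[OF Qm] by (subst AE_iff_measurable[of Q]) auto
    moreover have "AE y in \<mu>. y \<in> space \<mu>" by (rule AE_space)
    ultimately show ?thesis by eventually_elim (auto simp: P_def Q_def F_def)
  qed
  have pres: "distr \<mu> \<mu> T = \<mu>"
    by (rule measure_eqI) (auto simp: emeasure_distr inv\<mu>)
  have presn: "distr \<mu> \<mu> (T ^^ n) = \<mu>" for n
  proof (induction n)
    case 0 then show ?case by (simp add: distr_id2)
  next
    case (Suc n)
    have "distr \<mu> \<mu> (T ^^ Suc n) = distr \<mu> \<mu> (T ^^ n \<circ> T)" by (simp only: funpow_Suc_right)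
    also have "\<dots> = distr (distr \<mu> \<mu> T) \<mu> (T ^^ n)" by (rule distr_distr[symmetric]) auto
    finally show ?case using pres Suc.IH by (simp only:)
  qed
  have AEn: "AE x in \<mu>. (T ^^ n) x \<in> E \<longleftrightarrow> x \<in> E" for n
  proof (induction n)
    case 0 then show ?case by simp
  next
    case (Suc n)
    have "AE y in distr \<mu> \<mu> (T ^^ n). T y \<in> E \<longleftrightarrow> y \<in> E" unfolding presn[of n] by (rule AE1)
    then have "AE x in \<mu>. T ((T ^^ n) x) \<in> E \<longleftrightarrow> (T ^^ n) x \<in> E"
      by (rule AE_distrD[rotated]) auto
    with Suc show ?case by eventually_elim simp
  qed
  have AEall: "AE x in \<mu>. \<forall>n. (T ^^ n) x \<in> E \<longleftrightarrow> x \<in> E"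
    using AEn by (simp add: AE_all_countable)
  define E' where "E' = {x\<in>space \<mu>. \<forall>N::nat. \<exists>n\<ge>N. (T ^^ n) x \<in> E}"
  have E'm[measurable]: "E' \<in> sets \<mu>" unfolding E'_def by measurable
  have frq: "(\<forall>N::nat. \<exists>n\<ge>N. P n) \<longleftrightarrow> (\<forall>N::nat. \<exists>n\<ge>N. P (Suc n))" for P
  proof
    assume H: "\<forall>N. \<exists>n\<ge>N. P n"
    show "\<forall>N. \<exists>n\<ge>N. P (Suc n)"
    proof
      fix N obtain n where "n \<ge> Suc N" "P n" using H by blast
      then show "\<exists>n\<ge>N. P (Suc n)" by (intro exI[of _ "n - 1"]) auto
    qed
  next
    assume H: "\<forall>N. \<exists>n\<ge>N. P (Suc n)"
    show "\<forall>N. \<exists>n\<ge>N. P n"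
    proof
      fix N obtain n where "n \<ge> N" "P (Suc n)" using H by blast
      then show "\<exists>n\<ge>N. P n" by (intro exI[of _ "Suc n"]) auto
    qed
  qed
  have key: "(\<forall>N::nat. \<exists>n\<ge>N. (T ^^ n) (T x) \<in> E) \<longleftrightarrow> (\<forall>N::nat. \<exists>n\<ge>N. (T ^^ n) x \<in> E)" for x
  proof -
    have eqn: "(T ^^ n) (T x) = (T ^^ Suc n) x" for n by (simp only: funpow_Suc_right o_apply)
    show ?thesis unfolding eqn using frq[of "\<lambda>n. (T ^^ n) x \<in> E"] by (simp only:)
  qed
  have E'inv: "T -` E' \<inter> space \<mu> = E'"
  proof (rule set_eqI)
    fix x
    show "x \<in> T -` E' \<inter> space \<mu> \<longleftrightarrow> x \<in> E'"
    proof (cases "x \<in> space \<mu>")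
      case True
      then have "T x \<in> space \<mu>" using T by (rule measurable_space[rotated])
      then show ?thesis using True key[of x] unfolding E'_def by simp
    next
      case False then show ?thesis unfolding E'_def by simp
    qed
  qed
  have "AE x in \<mu>. x \<in> E' \<longleftrightarrow> x \<in> E"
    using AEall by eventually_elim (auto simp: E'_def E_def)
  then have "emeasure \<mu> E' = emeasure \<mu> E" by (rule emeasure_eq_AE) auto
  then have E01: "emeasure \<mu> E = 0 \<or> emeasure \<mu> E = 1" using erg[OF E'm E'inv] by simp
  have E0: "emeasure \<mu> E = 0"
  proof (rule ccontr)
    assume "emeasure \<mu> E \<noteq> 0"
    then have E1: "emeasure \<mu> E = 1" using E01 by simp
    have "emeasure \<mu> (space \<mu> - E) = 0" using emeasure_compl[OF Em] E1 M.emeasure_space_1 by simp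
    then have "emeasure \<pi> (space \<mu> - E) = 0" using dom[of "space \<mu> - E"] by auto
    then have "emeasure \<pi> E = 1" using emeasure_compl[of E \<pi>] sp spc P.emeasure_space_1 Em
      by (simp add: ennreal_minus_eq_0 P.emeasure_le_1 antisym)
    then have "1 = 1 + I E" using splitS[OF Em] E1 by simp
    then have "I E = 0" using ennreal_add_left_cancel[of 1 0 "I E"] by simp
    then have "emeasure \<mu> E = 0" by (intro Izero) auto
    then show False using E1 by simp
  qed
  have AEh: "AE x in \<mu>. h x \<le> 1"
  proof -
    have "AE x in \<mu>. x \<notin> E" using E0 Em sets.sets_into_space[OF Em] by (subst AE_iff_measurable[of E]) auto
    moreover have "AE y in \<mu>. y \<in> space \<mu>" by (rule AE_space)
    ultimately show ?thesis by eventually_elim (auto simp: E_def not_less)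
  qed
  show ?thesis
  proof (rule measure_eqI)
    show "sets \<pi> = sets \<mu>" by fact
    fix B assume B: "B \<in> sets \<pi>"
    then have Bm: "B \<in> sets \<mu>" using sp by simp
    have Cm: "space \<mu> - B \<in> sets \<mu>" using Bm by auto
    have AEh': "AE x in \<mu>. x \<in> S \<longrightarrow> h x \<le> 1" for S using AEh by eventually_elim simp
    have a: "emeasure \<pi> B \<le> emeasure \<mu> B" using leS[OF Bm AEh'] .
    have c: "emeasure \<pi> (space \<mu> - B) \<le> emeasure \<mu> (space \<mu> - B)" using leS[OF Cm AEh'] .
    have un: "B \<union> (space \<mu> - B) = space \<mu>" using sets.sets_into_space[OF Bm] by auto
    have "emeasure \<pi> B + emeasure \<pi> (space \<mu> - B) = emeasure \<pi> (B \<union> (space \<mu> - B))"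
      by (rule plus_emeasure) (use Bm Cm sp in auto)
    also have "\<dots> = 1" unfolding un using P.emeasure_space_1 spc by simp
    finally have s1: "emeasure \<pi> B + emeasure \<pi> (space \<mu> - B) = 1" .
    have "emeasure \<mu> B + emeasure \<mu> (space \<mu> - B) = emeasure \<mu> (B \<union> (space \<mu> - B))"
      by (rule plus_emeasure) (use Bm Cm in auto)
    also have "\<dots> = 1" unfolding un using M.emeasure_space_1 by simp
    finally have s2: "emeasure \<mu> B + emeasure \<mu> (space \<mu> - B) = 1" .
    from s1 s2 have "emeasure \<pi> B + emeasure \<pi> (space \<mu> - B) = emeasure \<mu> B + emeasure \<mu> (space \<mu> - B)" by simp
    then show "emeasure \<pi> B = emeasure \<mu> B"
      using ennreal_sandwich[OF a c] by simp
  qed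
qed

lemma diag_bounded:
  fixes v :: "nat \<Rightarrow> nat \<Rightarrow> real"
  assumes bdd: "\<And>n k. \<bar>v n k\<bar> \<le> B"
  shows "\<exists>d. strict_mono d \<and> (\<forall>k. convergent (\<lambda>n. v (d n) k))"
proof -
  let ?P = "\<lambda>k. \<lambda>s. convergent (\<lambda>n. v (s n) k)"
  interpret nat: subseqs ?P
  proof (unfold convergent_def, unfold subseqs_def, auto)
    fix k :: nat and s :: "nat \<Rightarrow> nat" assume s: "strict_mono s"
    have "bounded {-B..B}" by simp
    moreover have "\<And>n. v (s n) k \<in> {-B..B}"
      using bdd by (simp add: abs_le_iff minus_le_iff)
    ultimately have "\<exists>l s'. strict_mono s' \<and> ((\<lambda>n. v (s n) k) \<circ> s') \<longlonglongrightarrow> l"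
      using compact_Icc compact_imp_seq_compact seq_compactE by metis
    thus "\<exists>s'. strict_mono (s'::nat\<Rightarrow>nat) \<and> (\<exists>l. (\<lambda>n. v (s (s' n)) k) \<longlonglongrightarrow> l)"
      by (auto simp: comp_def)
  qed
  define d where "d = nat.diagseq"
  have subseq: "strict_mono d"
    unfolding d_def using nat.subseq_diagseq by auto
  have cnv: "?P k d" for k
  proof -
    have Pn_seqseq: "?P k (nat.seqseq (Suc k))"
      by (rule nat.seqseq_holds)
    have 1: "(\<lambda>n. v ((nat.seqseq (Suc k) \<circ> (\<lambda>n. nat.fold_reduce (Suc k) n
      (Suc k + n))) n) k) = (\<lambda>n. v (nat.seqseq (Suc k) n) k) \<circ>
      (\<lambda>n. nat.fold_reduce (Suc k) n (Suc k + n))"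
      by auto
    have 2: "?P k (d \<circ> ((+) (Suc k)))"
      unfolding d_def nat.diagseq_seqseq 1
      by (intro convergent_subseq_convergent Pn_seqseq nat.subseq_diagonal_rest)
    then obtain L where 3: "(\<lambda>na. v (d (na + Suc k)) k) \<longlonglongrightarrow> L"
      by (auto simp: add.commute dest: convergentD)
    then have "(\<lambda>n. v (d n) k) \<longlonglongrightarrow> L"
      by (rule LIMSEQ_offset)
    then show ?thesis
      by (auto simp: convergent_def)
  qed
  show ?thesis using subseq cnv by blast
qed

locale cylsys =
  fixes \<Omega> :: "'p set" and A :: "'p set set"
  assumes cntA: "countable A"
    and ringA: "ring_of_sets \<Omega> A"
    and topA: "\<Omega> \<in> A"
    and IntA: "Int_stable A"
    and nest: "\<And>C. range C \<subseteq> A \<Longrightarrow> decseq C \<Longrightarrow> (\<Inter>i. C i) = {} \<Longrightarrow> \<exists>n. C n = {}"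
begin

definition good :: "'p measure \<Rightarrow> bool" where
  "good \<nu> \<longleftrightarrow> prob_space \<nu> \<and> sets \<nu> = sigma_sets \<Omega> A \<and> space \<nu> = \<Omega>"

definition conv :: "(nat \<Rightarrow> 'p measure) \<Rightarrow> 'p measure \<Rightarrow> bool" where
  "conv s \<nu> \<longleftrightarrow> (\<forall>S\<in>A. (\<lambda>n. measure (s n) S) \<longlonglongrightarrow> measure \<nu> S)"

lemma A_sub: "A \<subseteq> Pow \<Omega>"
  using ringA by (simp add: ring_of_sets_iff)

lemma A_in_sets: "good \<nu> \<Longrightarrow> S \<in> A \<Longrightarrow> S \<in> sets \<nu>"
  unfolding good_def by auto

lemma uniq:
  assumes "good \<nu>1" "good \<nu>2" "\<And>S. S \<in> A \<Longrightarrow> measure \<nu>1 S = measure \<nu>2 S"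
  shows "\<nu>1 = \<nu>2"
proof -
  interpret p1: prob_space \<nu>1 using assms(1) by (simp add: good_def)
  interpret p2: prob_space \<nu>2 using assms(2) by (simp add: good_def)
  show ?thesis
  proof (rule measure_eqI_generator_eq[OF IntA A_sub, where A="\<lambda>_. \<Omega>"])
    fix X assume "X \<in> A"
    then show "emeasure \<nu>1 X = emeasure \<nu>2 X"
      using assms(3)[of X] by (simp add: p1.emeasure_eq_measure p2.emeasure_eq_measure)
  qed (use assms topA in \<open>auto simp: good_def\<close>)
qed

lemma limit_measure:
  fixes s :: "nat \<Rightarrow> 'p measure" and L :: "'p set \<Rightarrow> real"
  assumes g: "\<And>n. good (s n)" and lim: "\<And>S. S \<in> A \<Longrightarrow> (\<lambda>n. measure (s n) S) \<longlonglongrightarrow> L S"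
  shows "\<exists>\<nu>. good \<nu> \<and> (\<forall>S\<in>A. measure \<nu> S = L S)"
proof -
  interpret ring_of_sets \<Omega> A by (rule ringA)
  have ps: "prob_space (s n)" for n using g by (simp add: good_def)
  have Lnn: "0 \<le> L S" if "S \<in> A" for S
    using lim[OF that] by (rule LIMSEQ_le_const) simp
  have L0: "L {} = 0"
  proof -
    have "(\<lambda>n. measure (s n) {}) \<longlonglongrightarrow> L {}" using lim[OF empty_sets] .
    then show ?thesis by (simp add: LIMSEQ_const_iff)
  qed
  have Ladd: "L (a \<union> b) = L a + L b" if ab: "a \<in> A" "b \<in> A" "a \<inter> b = {}" for a b
  proof -
    have "measure (s n) (a \<union> b) = measure (s n) a + measure (s n) b" for n
    proof -
      interpret prob_space "s n" by (rule ps)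
      show ?thesis using ab A_in_sets[OF g] by (intro measure_Union) auto
    qed
    then have "(\<lambda>n. measure (s n) (a \<union> b)) \<longlonglongrightarrow> L a + L b"
      using tendsto_add[OF lim[OF ab(1)] lim[OF ab(2)]] by simp
    moreover have "(\<lambda>n. measure (s n) (a \<union> b)) \<longlonglongrightarrow> L (a \<union> b)" using ab by (intro lim) auto
    ultimately show ?thesis using LIMSEQ_unique by blast
  qed
  define f where "f S = ennreal (L S)" for S
  have pos: "positive A f" unfolding positive_def f_def using L0 by simp
  have add: "additive A f" unfolding additive_def f_def using Ladd Lnn by (simp add: ennreal_plus)
  have fin: "f S \<noteq> \<infinity>" if "S \<in> A" for S unfolding f_def by simp
  have cont: "(\<lambda>i. f (C i)) \<longlonglongrightarrow> 0" if C: "range C \<subseteq> A" "decseq C" "(\<Inter>i. C i) = {}" for C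
  proof -
    obtain N where N: "C N = {}" using nest[OF C] by blast
    have Cn: "C n = {}" if "n \<ge> N" for n using \<open>decseq C\<close> N that unfolding decseq_def by blast
    have "eventually (\<lambda>i. f (C i) = 0) sequentially"
      unfolding eventually_sequentially
    proof (intro exI[of _ N] allI impI)
      fix n assume "N \<le> n" then show "f (C n) = 0" using Cn L0 by (simp add: f_def)
    qed
    then show ?thesis by (rule tendsto_eventually)
  qed
  obtain \<mu> where \<mu>: "\<forall>S\<in>A. \<mu> S = f S" "measure_space \<Omega> (sigma_sets \<Omega> A) \<mu>"
    using caratheodory_empty_continuous[OF pos add fin cont] by blast
  define \<nu> where "\<nu> = measure_of \<Omega> A \<mu>"
  have sets\<nu>: "sets \<nu> = sigma_sets \<Omega> A" unfolding \<nu>_def using A_sub by (rule sets_measure_of)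
  have space\<nu>: "space \<nu> = \<Omega>" unfolding \<nu>_def using A_sub by (rule space_measure_of)
  have em: "emeasure \<nu> S = \<mu> S" if "S \<in> sigma_sets \<Omega> A" for S
  proof (rule emeasure_measure_of[OF \<nu>_def A_sub])
    show "positive (sets \<nu>) \<mu>" using \<mu>(2) sets\<nu> by (simp add: measure_space_def)
    show "countably_additive (sets \<nu>) \<mu>" using \<mu>(2) sets\<nu> by (simp add: measure_space_def)
    show "S \<in> sets \<nu>" using that sets\<nu> by simp
  qed
  have emA: "emeasure \<nu> S = ennreal (L S)" if "S \<in> A" for S
    using em[of S] \<mu>(1) that by (auto simp: f_def)
  have L1: "L \<Omega> = 1"
  proof -
    have "measure (s n) \<Omega> = 1" for n
    proof -
      interpret prob_space "s n" by (rule ps)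
      show ?thesis using g[of n] prob_space by (simp add: good_def)
    qed
    then show ?thesis using lim[OF topA] by (simp add: LIMSEQ_const_iff)
  qed
  have "prob_space \<nu>" by (rule prob_spaceI) (simp add: space\<nu> emA[OF topA] L1)
  then have "good \<nu>" unfolding good_def using sets\<nu> space\<nu> by simp
  moreover have "measure \<nu> S = L S" if "S \<in> A" for S
    using emA[OF that] Lnn[OF that] by (simp add: measure_def)
  ultimately show ?thesis by blast
qed

lemma seq_compact:
  fixes s :: "nat \<Rightarrow> 'p measure"
  assumes g: "\<And>n. good (s n)"
  shows "\<exists>d \<nu>. strict_mono d \<and> good \<nu> \<and> conv (s \<circ> d) \<nu>"
proof -
  have Ane: "A \<noteq> {}" using topA by auto
  define e where "e = from_nat_into A"
  have eA: "e k \<in> A" for k unfolding e_def using Ane by (rule from_nat_into)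
  have Ae: "S \<in> A \<Longrightarrow> \<exists>k. e k = S" for S unfolding e_def using cntA by (metis from_nat_into_to_nat_on)
  define v where "v n k = measure (s n) (e k)" for n k
  have vb: "\<bar>v n k\<bar> \<le> 1" for n k
  proof -
    interpret prob_space "s n" using g by (simp add: good_def)
    show ?thesis unfolding v_def by simp
  qed
  obtain d where d: "strict_mono d" "\<And>k. convergent (\<lambda>n. v (d n) k)" using diag_bounded[of v 1, OF vb] by blast
  define L where "L S = lim (\<lambda>n. measure (s (d n)) S)" for S
  have lim: "(\<lambda>n. measure (s (d n)) S) \<longlonglongrightarrow> L S" if S: "S \<in> A" for S
  proof -
    obtain k where "e k = S" using Ae[OF S] by blast
    then have "convergent (\<lambda>n. measure (s (d n)) S)" using d(2)[of k] by (simp add: v_def)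
    then show ?thesis unfolding L_def by (simp add: convergent_LIMSEQ_iff)
  qed
  obtain \<nu> where \<nu>: "good \<nu>" "\<forall>S\<in>A. measure \<nu> S = L S"
    using limit_measure[of "s \<circ> d" L] g lim by auto
  have "conv (s \<circ> d) \<nu>" unfolding conv_def using lim \<nu>(2) by simp
  then show ?thesis using d(1) \<nu>(1) by blast
qed

lemma attains_min:
  fixes \<phi> :: "'p measure \<Rightarrow> real"
  assumes ne: "S \<noteq> {}" and gS: "\<And>\<nu>. \<nu> \<in> S \<Longrightarrow> good \<nu>"
    and closed: "\<And>s \<nu>. (\<And>n. s n \<in> S) \<Longrightarrow> good \<nu> \<Longrightarrow> conv s \<nu> \<Longrightarrow> \<nu> \<in> S"
    and cont: "\<And>s \<nu>. (\<And>n. s n \<in> S) \<Longrightarrow> good \<nu> \<Longrightarrow> conv s \<nu> \<Longrightarrow> (\<lambda>n. \<phi> (s n)) \<longlonglongrightarrow> \<phi> \<nu>"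
    and bdd: "\<And>\<nu>. \<nu> \<in> S \<Longrightarrow> b \<le> \<phi> \<nu>"
  shows "\<exists>\<nu>\<in>S. \<forall>\<nu>'\<in>S. \<phi> \<nu> \<le> \<phi> \<nu>'"
proof -
  define c where "c = Inf (\<phi> ` S)"
  have bddb: "bdd_below (\<phi> ` S)" using bdd unfolding bdd_below_def by blast
  have cle: "c \<le> \<phi> \<nu>" if "\<nu> \<in> S" for \<nu> unfolding c_def using bddb that by (simp add: cInf_lower)
  have "\<exists>\<nu>\<in>S. \<phi> \<nu> < c + 1 / (Suc n)" for n
  proof -
    have "c < c + 1 / Suc n" by simp
    then show ?thesis unfolding c_def using ne by (subst (asm) cInf_less_iff) (auto simp: bddb)
  qed
  then obtain s where s: "\<And>n. s n \<in> S" "\<And>n. \<phi> (s n) < c + 1 / Suc n" by metis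
  obtain d \<nu> where d: "strict_mono d" "good \<nu>" "conv (s \<circ> d) \<nu>"
    using seq_compact[of s] s(1) gS by blast
  have sdS: "(s \<circ> d) n \<in> S" for n using s(1) by simp
  have \<nu>S: "\<nu> \<in> S" using closed[OF sdS d(2,3)] .
  have lim: "(\<lambda>n. \<phi> ((s \<circ> d) n)) \<longlonglongrightarrow> \<phi> \<nu>" using cont[OF sdS d(2,3)] .
  have "\<phi> \<nu> \<le> c"
  proof (rule LIMSEQ_le[OF lim])
    show "(\<lambda>n. c + 1 / Suc (d n)) \<longlonglongrightarrow> c"
    proof -
      have "(\<lambda>n. 1 / real (Suc n)) \<longlonglongrightarrow> 0" using LIMSEQ_Suc[OF lim_inverse_n] by (simp add: inverse_eq_divide)
      then have h: "(\<lambda>n. 1 / real (Suc (d n))) \<longlonglongrightarrow> 0" using LIMSEQ_subseq_LIMSEQ[OF _ d(1)] by (simp add: o_def)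
      show ?thesis using tendsto_add[OF tendsto_const[of c] h] by simp
    qed
    show "\<exists>N. \<forall>n\<ge>N. \<phi> ((s \<circ> d) n) \<le> c + 1 / Suc (d n)"
      using s(2) by (auto intro: less_imp_le)
  qed
  then show ?thesis using \<nu>S cle by (intro bexI[of _ \<nu>]) (auto intro: order_trans)
qed

end

lemma rs_lshift: "rs n (lshift x) = (\<lambda>u. restrict (\<lambda>i. u (i + 1)) {- int n .. int n}) (rs (Suc n) x)"
  unfolding rs_def lshift_def restrict_def fun_eq_iff by auto

locale setting =
  fixes \<Sigma> :: "'a set" and X Y :: "(int \<Rightarrow> 'a) set" and \<mu> :: "(int \<Rightarrow> 'a) measure"
  assumes fin\<Sigma>: "finite \<Sigma>" and sX: "shift_space \<Sigma> X" and sY: "shift_space \<Sigma> Y"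
    and erg\<mu>: "ergodic_borel_prob (subtopology (full_shift_top \<Sigma>) Y) lshift \<mu>"
begin

abbreviation "TT \<equiv> prod_topology (subtopology (full_shift_top \<Sigma>) X) (subtopology (full_shift_top \<Sigma>) Y)"
abbreviation "AA \<equiv> gcyl (X \<times> Y) rs2"
abbreviation "AY \<equiv> gcyl Y rs"

lemma XT: "X \<subseteq> topspace (full_shift_top \<Sigma>)" using sX unfolding shift_space_def by (simp add: closedin_subset)
lemma YT: "Y \<subseteq> topspace (full_shift_top \<Sigma>)" using sY unfolding shift_space_def by (simp add: closedin_subset)

lemma lshiftX: "x \<in> X \<Longrightarrow> lshift x \<in> X" using sX unfolding shift_space_def by blast
lemma lshiftY: "y \<in> Y \<Longrightarrow> lshift y \<in> Y" using sY unfolding shift_space_def by blast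

lemma topTT: "topspace TT = X \<times> Y" using XT YT by auto

lemma setsTT: "sets (borel_of TT) = sigma_sets (X \<times> Y) AA"
  using sets_borel_P[OF fin\<Sigma> XT YT] .

lemma setsY: "sets (borel_of (subtopology (full_shift_top \<Sigma>) Y)) = sigma_sets Y AY"
  using sets_borel_Y[OF fin\<Sigma> YT] .

lemma mu_props: "sets \<mu> = sigma_sets Y AY" "space \<mu> = Y" "prob_space \<mu>"
  "\<And>B. B \<in> sets \<mu> \<Longrightarrow> emeasure \<mu> (lshift -` B \<inter> space \<mu>) = emeasure \<mu> B"
  "\<And>B. B \<in> sets \<mu> \<Longrightarrow> lshift -` B \<inter> space \<mu> = B \<Longrightarrow> emeasure \<mu> B = 0 \<or> emeasure \<mu> B = 1"
  using erg\<mu> setsY YT unfolding ergodic_borel_prob_def invariant_borel_prob_def by auto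

lemma finAA: "finite (rs2 n ` (X \<times> Y))"
  using finite_rs2[OF fin\<Sigma>] XT YT topspace_full[of \<Sigma>] by auto

lemma compactTT: "compact_space TT"
proof -
  have cf: "compact_space (full_shift_top \<Sigma>)"
    unfolding full_shift_top_def using fin\<Sigma>
    by (simp add: compact_space_product_topology compact_space_discrete_topology)
  have "compact_space (subtopology (full_shift_top \<Sigma>) X)"
    using closedin_compact_space[OF cf] sX unfolding shift_space_def by (simp add: compact_space_subtopology)
  moreover have "compact_space (subtopology (full_shift_top \<Sigma>) Y)"
    using closedin_compact_space[OF cf] sY unfolding shift_space_def by (simp add: compact_space_subtopology)
  ultimately show ?thesis by (simp add: compact_space_prod_topology)
qed

lemma closedAA: "S \<in> AA \<Longrightarrow> closedin TT S"
proof -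
  assume S: "S \<in> AA"
  interpret refining "X \<times> Y" rs2 by (rule refining_rs2)
  have "(X \<times> Y) - S \<in> AA" using Diff_mem[OF top_mem S] .
  then have "openin TT ((X \<times> Y) - S)" by (rule openin_cylP[OF XT YT])
  moreover have "S \<subseteq> X \<times> Y" using S sub_Pow by blast
  ultimately show ?thesis unfolding closedin_def topTT by (simp add: Diff_Diff_Int Int_absorb1)
qed

lemma cylsys: "cylsys (X \<times> Y) AA"
proof -
  interpret refining "X \<times> Y" rs2 by (rule refining_rs2)
  have c1: "countable AA" by (rule gcyl_countable) (rule finAA)
  have nest: "\<exists>n. C n = {}" if C: "range C \<subseteq> AA" "decseq C" "(\<Inter>i. C i) = {}" for C :: "nat \<Rightarrow> _"
  proof (rule ccontr)
    assume "\<nexists>n. C n = {}"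
    then have "\<And>n. C n \<noteq> {}" by blast
    moreover have "\<And>n. closedin TT (C n)" using C(1) closedAA by blast
    ultimately have "(\<Inter>n. C n) \<noteq> {}" using compact_space_imp_nest[OF compactTT] C(2) by blast
    then show False using C(3) by simp
  qed
  show ?thesis by (rule cylsys.intro[OF c1 ring top_mem Int_stable nest])
qed

sublocale cs: cylsys "X \<times> Y" AA by (rule cylsys)

lemma shift_AA: assumes "S \<in> AA" shows "lshift2 -` S \<inter> (X \<times> Y) \<in> AA"
proof -
  obtain n S0 where S: "S = {p\<in>X \<times> Y. rs2 n p \<in> S0}" using assms unfolding gcyl_mem by blast
  define g where "g = (\<lambda>q::(int \<Rightarrow> 'a) \<times> (int \<Rightarrow> 'a). ((\<lambda>u. restrict (\<lambda>i. u (i + 1)) {- int n .. int n}) (fst q),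
     (\<lambda>u. restrict (\<lambda>i. u (i + 1)) {- int n .. int n}) (snd q)))"
  have "lshift2 -` S \<inter> (X \<times> Y) = {p\<in>X \<times> Y. rs2 (Suc n) p \<in> g -` S0}"
  proof (rule set_eqI)
    fix p :: "(int \<Rightarrow> 'a) \<times> (int \<Rightarrow> 'a)"
    obtain x y where p: "p = (x, y)" by (cases p)
    have "rs2 n (lshift2 p) = g (rs2 (Suc n) p)" unfolding p lshift2_def rs2_def g_def by (simp add: rs_lshift)
    moreover have "p \<in> X \<times> Y \<Longrightarrow> lshift2 p \<in> X \<times> Y" unfolding p lshift2_def using lshiftX lshiftY by simp
    ultimately show "p \<in> lshift2 -` S \<inter> (X \<times> Y) \<longleftrightarrow> p \<in> {p\<in>X \<times> Y. rs2 (Suc n) p \<in> g -` S0}"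
      unfolding S by auto
  qed
  then show ?thesis unfolding gcyl_mem by blast
qed

lemma shift_AY: assumes "S \<in> AY" shows "lshift -` S \<inter> Y \<in> AY"
proof -
  obtain n S0 where S: "S = {p\<in>Y. rs n p \<in> S0}" using assms unfolding gcyl_mem by blast
  define g where "g = (\<lambda>u::int \<Rightarrow> 'a. restrict (\<lambda>i. u (i + 1)) {- int n .. int n})"
  have "lshift -` S \<inter> Y = {p\<in>Y. rs (Suc n) p \<in> g -` S0}"
  proof (rule set_eqI)
    fix p
    have "rs n (lshift p) = g (rs (Suc n) p)" unfolding g_def by (simp add: rs_lshift)
    then show "p \<in> lshift -` S \<inter> Y \<longleftrightarrow> p \<in> {p\<in>Y. rs (Suc n) p \<in> g -` S0}"
      unfolding S using lshiftY by auto
  qed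
  then show ?thesis unfolding gcyl_mem by blast
qed

lemma XB_AA: assumes "B \<in> AY" shows "X \<times> B \<in> AA"
proof -
  obtain n S0 where S: "B = {p\<in>Y. rs n p \<in> S0}" using assms unfolding gcyl_mem by blast
  have "X \<times> B = {p\<in>X \<times> Y. rs2 n p \<in> {q. snd q \<in> S0}}" unfolding S rs2_def by auto
  then show ?thesis unfolding gcyl_mem by blast
qed

definition D where "D = {(x, y) \<in> X \<times> Y. x 0 \<noteq> y 0}"

lemma D_AA: "D \<in> AA"
proof -
  have "D = {p\<in>X \<times> Y. rs2 0 p \<in> {q. fst q 0 \<noteq> snd q 0}}" unfolding D_def rs2_def rs_def by auto
  then show ?thesis unfolding gcyl_mem by blast
qed

lemma ext_iff: "\<nu> \<in> extensions \<Sigma> X Y \<mu> \<longleftrightarrow> cs.good \<nu> \<and>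
   (\<forall>B\<in>sets \<nu>. emeasure \<nu> (lshift2 -` B \<inter> space \<nu>) = emeasure \<nu> B) \<and>
   (\<forall>B\<in>sets \<mu>. emeasure \<nu> (X \<times> B) = emeasure \<mu> B)"
  unfolding extensions_def invariant_borel_prob_def cs.good_def setsTT topTT by auto

end

context setting begin

lemma AA_sets: "cs.good \<nu> \<Longrightarrow> S \<in> AA \<Longrightarrow> S \<in> sets \<nu>"
  by (rule cs.A_in_sets)

lemma AY_sub: "AY \<subseteq> Pow Y"
  using refining.sub_Pow[OF refining_rs] .

lemma meas_T: assumes g: "cs.good \<nu>" shows "lshift2 \<in> measurable \<nu> \<nu>"
proof (rule measurable_sigma_sets[OF _ cs.A_sub])
  show "sets \<nu> = sigma_sets (X \<times> Y) AA" using g by (simp add: cs.good_def)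
  show "lshift2 \<in> space \<nu> \<rightarrow> X \<times> Y" using g lshiftX lshiftY by (auto simp: cs.good_def lshift2_def)
  fix S assume "S \<in> AA"
  then have "lshift2 -` S \<inter> (X \<times> Y) \<in> AA" by (rule shift_AA)
  then show "lshift2 -` S \<inter> space \<nu> \<in> sets \<nu>" using g AA_sets by (simp add: cs.good_def)
qed

lemma meas_snd: assumes g: "cs.good \<nu>" shows "snd \<in> measurable \<nu> \<mu>"
proof (rule measurable_sigma_sets[OF mu_props(1) AY_sub])
  show "snd \<in> space \<nu> \<rightarrow> Y" using g by (auto simp: cs.good_def)
  fix B assume B: "B \<in> AY"
  then have "B \<subseteq> Y" using AY_sub by blast
  then have "snd -` B \<inter> space \<nu> = X \<times> B" using g by (auto simp: cs.good_def)
  then show "snd -` B \<inter> space \<nu> \<in> sets \<nu>" using XB_AA[OF B] AA_sets[OF g] by simp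
qed

lemma meas_shift_mu: "lshift \<in> measurable \<mu> \<mu>"
proof (rule measurable_sigma_sets[OF mu_props(1) AY_sub])
  show "lshift \<in> space \<mu> \<rightarrow> Y" using lshiftY mu_props(2) by auto
  fix B assume B: "B \<in> AY"
  have "lshift -` B \<inter> Y \<in> AY" by (rule shift_AY[OF B])
  then show "lshift -` B \<inter> space \<mu> \<in> sets \<mu>" using mu_props(1,2) by auto
qed

lemma Y_uniq:
  assumes "prob_space M" "sets M = sets \<mu>" "\<And>B. B \<in> AY \<Longrightarrow> emeasure M B = emeasure \<mu> B"
  shows "M = \<mu>"
proof -
  interpret p: prob_space M by fact
  interpret pm: prob_space \<mu> by (rule mu_props(3))
  interpret refining Y rs by (rule refining_rs)
  show ?thesis
  proof (rule measure_eqI_generator_eq[OF Int_stable AY_sub, where A="\<lambda>_. Y"])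
    show "sets M = sigma_sets Y AY" using assms(2) mu_props(1) by simp
    show "sets \<mu> = sigma_sets Y AY" using mu_props(1) by simp
  qed (use assms top_mem p.emeasure_finite pm.emeasure_finite in auto)
qed

lemma XB_eq: "B \<subseteq> Y \<Longrightarrow> snd -` B \<inter> (X \<times> Y) = X \<times> B" by auto

lemma closed_ext:
  assumes s: "\<And>n. s n \<in> extensions \<Sigma> X Y \<mu>" and g: "cs.good \<nu>" and c: "cs.conv s \<nu>"
  shows "\<nu> \<in> extensions \<Sigma> X Y \<mu>"
proof -
  have gs: "cs.good (s n)" for n using s ext_iff by blast
  interpret pn: prob_space \<nu> using g by (simp add: cs.good_def)
  have spn: "space \<nu> = X \<times> Y" using g by (simp add: cs.good_def)
  have sps: "space (s n) = X \<times> Y" for n using gs by (simp add: cs.good_def)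
  have lim: "(\<lambda>n. measure (s n) S) \<longlonglongrightarrow> measure \<nu> S" if "S \<in> AA" for S
    using c that unfolding cs.conv_def by blast
  have invS: "measure \<nu> (lshift2 -` S \<inter> (X \<times> Y)) = measure \<nu> S" if S: "S \<in> AA" for S
  proof -
    have S': "lshift2 -` S \<inter> (X \<times> Y) \<in> AA" using shift_AA[OF S] .
    have "measure (s n) (lshift2 -` S \<inter> (X \<times> Y)) = measure (s n) S" for n
    proof -
      have "emeasure (s n) (lshift2 -` S \<inter> space (s n)) = emeasure (s n) S"
        using s[of n] ext_iff AA_sets[OF gs S] by blast
      then show ?thesis using sps by (simp add: measure_def)
    qed
    then have "(\<lambda>n. measure (s n) S) \<longlonglongrightarrow> measure \<nu> (lshift2 -` S \<inter> (X \<times> Y))"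
      using lim[OF S'] by simp
    then show ?thesis using lim[OF S] LIMSEQ_unique by blast
  qed
  have mT: "lshift2 \<in> measurable \<nu> \<nu>" by (rule meas_T[OF g])
  have dT: "distr \<nu> \<nu> lshift2 = \<nu>"
  proof (rule cs.uniq)
    show "cs.good (distr \<nu> \<nu> lshift2)" using g pn.prob_space_distr[OF mT] by (simp add: cs.good_def)
    show "cs.good \<nu>" by fact
    fix S assume S: "S \<in> AA"
    show "measure (distr \<nu> \<nu> lshift2) S = measure \<nu> S"
      using measure_distr[OF mT AA_sets[OF g S]] invS[OF S] spn by simp
  qed
  have inv: "\<forall>B\<in>sets \<nu>. emeasure \<nu> (lshift2 -` B \<inter> space \<nu>) = emeasure \<nu> B"
  proof
    fix B assume B: "B \<in> sets \<nu>"
    have "emeasure \<nu> (lshift2 -` B \<inter> space \<nu>) = emeasure (distr \<nu> \<nu> lshift2) B"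
      by (rule emeasure_distr[OF mT B, symmetric])
    then show "emeasure \<nu> (lshift2 -` B \<inter> space \<nu>) = emeasure \<nu> B" using dT by simp
  qed
  have ms: "snd \<in> measurable \<nu> \<mu>" by (rule meas_snd[OF g])
  interpret pm: prob_space \<mu> using mu_props(3) .
  have dS: "distr \<nu> \<mu> snd = \<mu>"
  proof (rule Y_uniq)
    show "prob_space (distr \<nu> \<mu> snd)" using pn.prob_space_distr[OF ms] .
    show "sets (distr \<nu> \<mu> snd) = sets \<mu>" by simp
    fix B assume B: "B \<in> AY"
    have BY: "B \<subseteq> Y" using B AY_sub by blast
    have XB: "X \<times> B \<in> AA" using XB_AA[OF B] .
    have "measure (s n) (X \<times> B) = measure \<mu> B" for n
      using s[of n] ext_iff mu_props(1) B by (auto simp: measure_def)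
    then have "(\<lambda>n. measure (s n) (X \<times> B)) \<longlonglongrightarrow> measure \<mu> B" by simp
    then have eqm: "measure \<nu> (X \<times> B) = measure \<mu> B" using lim[OF XB] LIMSEQ_unique by blast
    have Bs: "B \<in> sets \<mu>" using B mu_props(1) by auto
    have "emeasure (distr \<nu> \<mu> snd) B = emeasure \<nu> (snd -` B \<inter> space \<nu>)"
      by (rule emeasure_distr[OF ms Bs])
    also have "\<dots> = emeasure \<nu> (X \<times> B)" using XB_eq[OF BY] spn by simp
    also have "\<dots> = emeasure \<mu> B" using eqm by (simp add: pn.emeasure_eq_measure pm.emeasure_eq_measure)
    finally show "emeasure (distr \<nu> \<mu> snd) B = emeasure \<mu> B" .
  qed
  have marg: "\<forall>B\<in>sets \<mu>. emeasure \<nu> (X \<times> B) = emeasure \<mu> B"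
  proof
    fix B assume Bs: "B \<in> sets \<mu>"
    have BY: "B \<subseteq> Y" using Bs mu_props(2) sets.sets_into_space by blast
    have "emeasure \<nu> (X \<times> B) = emeasure \<nu> (snd -` B \<inter> space \<nu>)" using XB_eq[OF BY] spn by simp
    also have "\<dots> = emeasure (distr \<nu> \<mu> snd) B" by (rule emeasure_distr[OF ms Bs, symmetric])
    finally show "emeasure \<nu> (X \<times> B) = emeasure \<mu> B" using dS by simp
  qed
  show ?thesis using g inv marg ext_iff by blast
qed

lemma cond_ext:
  assumes \<nu>: "\<nu> \<in> extensions \<Sigma> X Y \<mu>" and A: "A \<in> sets \<nu>" "lshift2 -` A \<inter> space \<nu> = A"
    and pos: "emeasure \<nu> A \<noteq> 0"
  shows "uniform_measure \<nu> A \<in> extensions \<Sigma> X Y \<mu>"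
proof -
  have g: "cs.good \<nu>" and inv: "\<And>B. B\<in>sets \<nu> \<Longrightarrow> emeasure \<nu> (lshift2 -` B \<inter> space \<nu>) = emeasure \<nu> B"
    and marg: "\<And>B. B\<in>sets \<mu> \<Longrightarrow> emeasure \<nu> (X \<times> B) = emeasure \<mu> B"
    using \<nu> ext_iff by auto
  interpret pn: prob_space \<nu> using g by (simp add: cs.good_def)
  interpret pm: prob_space \<mu> using mu_props(3) .
  have spn: "space \<nu> = X \<times> Y" using g by (simp add: cs.good_def)
  define U where "U = uniform_measure \<nu> A"
  have fin: "emeasure \<nu> A \<noteq> \<infinity>" by simp
  have pU: "prob_space U" unfolding U_def using pos fin by (rule prob_space_uniform_measure)
  have gU: "cs.good U" using g pU by (simp add: cs.good_def U_def)
  have emU: "emeasure U B = emeasure \<nu> (A \<inter> B) / emeasure \<nu> A" if "B \<in> sets \<nu>" for B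
    unfolding U_def using A(1) that by simp
  have mT: "lshift2 \<in> measurable \<nu> \<nu>" by (rule meas_T[OF g])
  have invU: "emeasure U (lshift2 -` B \<inter> space U) = emeasure U B" if B: "B \<in> sets \<nu>" for B
  proof -
    have B': "lshift2 -` B \<inter> space \<nu> \<in> sets \<nu>" using mT B by (rule measurable_sets)
    have "A \<inter> (lshift2 -` B \<inter> space \<nu>) = lshift2 -` (A \<inter> B) \<inter> space \<nu>"
      using A(2) by blast
    then have "emeasure \<nu> (A \<inter> (lshift2 -` B \<inter> space \<nu>)) = emeasure \<nu> (A \<inter> B)"
      using inv[of "A \<inter> B"] A(1) B by simp
    then show ?thesis using emU[OF B] emU[OF B'] by (simp add: U_def)
  qed
  have mS: "snd \<in> measurable U \<mu>" using meas_snd[OF gU] .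
  define \<pi> where "\<pi> = distr U \<mu> snd"
  have ppi: "prob_space \<pi>" unfolding \<pi>_def using prob_space.prob_space_distr[OF pU mS] .
  have spU: "space U = X \<times> Y" using spn by (simp add: U_def)
  have pi_eq: "emeasure \<pi> B = emeasure U (X \<times> B)" if B: "B \<in> sets \<mu>" for B
  proof -
    have BY: "B \<subseteq> Y" using B mu_props(2) sets.sets_into_space by blast
    show ?thesis unfolding \<pi>_def using emeasure_distr[OF mS B] XB_eq[OF BY] spU by simp
  qed
  have XBs: "X \<times> B \<in> sets \<nu>" if B: "B \<in> sets \<mu>" for B
  proof -
    have BY: "B \<subseteq> Y" using B mu_props(2) sets.sets_into_space by blast
    have "snd -` B \<inter> space \<nu> \<in> sets \<nu>" using meas_snd[OF g] B by (rule measurable_sets)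
    then show ?thesis using XB_eq[OF BY] spn by simp
  qed
  have "\<pi> = \<mu>"
  proof (rule ac_invariant_eq[OF mu_props(3) ppi _ meas_shift_mu mu_props(4) _ mu_props(5)])
    show "sets \<pi> = sets \<mu>" by (simp add: \<pi>_def)
    fix B assume B: "B \<in> sets \<mu>"
    have BY: "B \<subseteq> Y" using B mu_props(2) sets.sets_into_space by blast
    have B': "lshift -` B \<inter> space \<mu> \<in> sets \<mu>" using meas_shift_mu B by (rule measurable_sets)
    have "X \<times> (lshift -` B \<inter> space \<mu>) = lshift2 -` (X \<times> B) \<inter> space U"
      using spU mu_props(2) lshiftX by (auto simp: lshift2_def)
    then show "emeasure \<pi> (lshift -` B \<inter> space \<mu>) = emeasure \<pi> B"
      using pi_eq[OF B'] pi_eq[OF B] invU[OF XBs[OF B]] by simp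
    have "emeasure \<pi> B = emeasure \<nu> (A \<inter> (X \<times> B)) / emeasure \<nu> A"
      using pi_eq[OF B] emU[OF XBs[OF B]] by simp
    also have "\<dots> \<le> emeasure \<nu> (X \<times> B) / emeasure \<nu> A"
      by (intro divide_right_mono_ennreal emeasure_mono) (use XBs[OF B] in auto)
    also have "\<dots> = (1 / emeasure \<nu> A) * emeasure \<mu> B"
      using marg[OF B] by (simp add: divide_ennreal_def mult.commute)
    finally show "emeasure \<pi> B \<le> (1 / emeasure \<nu> A) * emeasure \<mu> B" .
  qed
  then have margU: "\<forall>B\<in>sets \<mu>. emeasure U (X \<times> B) = emeasure \<mu> B"
    using pi_eq by simp
  have "\<forall>B\<in>sets U. emeasure U (lshift2 -` B \<inter> space U) = emeasure U B"
    using invU by (simp add: U_def)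
  then show ?thesis using gU margU ext_iff unfolding U_def by blast
qed

end

context setting begin

definition ee where "ee = from_nat_into AA"

lemma eeA: "ee k \<in> AA"
  unfolding ee_def using cs.topA by (intro from_nat_into) auto

lemma Aee: "S \<in> AA \<Longrightarrow> \<exists>k. ee k = S"
  unfolding ee_def using cs.cntA by (metis from_nat_into_to_nat_on)

definition gq :: "((int \<Rightarrow> 'a) \<times> (int \<Rightarrow> 'a)) measure \<Rightarrow> real" where
  "gq \<nu> = (\<Sum>k. (1/2)^k * (measure \<nu> (ee k))^2)"

lemma meas_le1: "cs.good \<nu> \<Longrightarrow> measure \<nu> S \<le> 1"
  unfolding cs.good_def using prob_space.prob_le_1 by blast

lemma term_bound: "cs.good \<nu> \<Longrightarrow> norm ((1/2::real)^k * (measure \<nu> (ee k))^2) \<le> (1/2)^k"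
proof -
  assume g: "cs.good \<nu>"
  have "0 \<le> measure \<nu> (ee k)" "measure \<nu> (ee k) \<le> 1" using meas_le1[OF g] by auto
  then have "(measure \<nu> (ee k))^2 \<le> 1" by (simp add: power_le_one)
  then show ?thesis by (simp add: mult_left_le)
qed

lemma summable_g: "cs.good \<nu> \<Longrightarrow> summable (\<lambda>k. (1/2::real)^k * (measure \<nu> (ee k))^2)"
  by (rule summable_comparison_test[OF _ summable_geometric[of "1/2::real"]]) (use term_bound in auto)

lemma g_le2: "cs.good \<nu> \<Longrightarrow> gq \<nu> \<le> 2"
proof -
  assume g: "cs.good \<nu>"
  have "gq \<nu> \<le> (\<Sum>k. (1/2::real)^k)" unfolding gq_def
    by (rule suminf_le) (use term_bound[OF g] summable_g[OF g] summable_geometric[of "1/2::real"] in auto)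
  also have "\<dots> = 2" using suminf_geometric[of "1/2::real"] by simp
  finally show ?thesis .
qed

lemma g_cont:
  assumes gs: "\<And>n. cs.good (s n)" and g: "cs.good \<nu>" and c: "cs.conv s \<nu>"
  shows "(\<lambda>n. gq (s n)) \<longlonglongrightarrow> gq \<nu>"
proof -
  have lim: "(\<lambda>n. (1/2::real)^k * (measure (s n) (ee k))^2) \<longlonglongrightarrow> (1/2)^k * (measure \<nu> (ee k))^2" for k
    using c eeA[of k] unfolding cs.conv_def by (intro tendsto_intros) auto
  have "eventually (\<lambda>(k,n). norm ((1/2::real)^k * (measure (s n) (ee k))^2) \<le> (1/2)^k) (at_top \<times>\<^sub>F sequentially)"
  proof (rule always_eventually, rule allI)
    fix kn :: "nat \<times> nat"
    obtain k n where kn: "kn = (k, n)" by (cases kn)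
    show "(\<lambda>(k,n). norm ((1/2::real)^k * (measure (s n) (ee k))^2) \<le> (1/2)^k) kn"
      unfolding kn using term_bound[OF gs[of n], of k] by (simp only: prod.case)
  qed
  from tannerys_theorem[OF lim this summable_geometric[of "1/2::real"]]
  show ?thesis unfolding gq_def by simp
qed

lemma f_cont:
  assumes c: "cs.conv s \<nu>"
  shows "(\<lambda>n. measure (s n) D) \<longlonglongrightarrow> measure \<nu> D"
  using c D_AA unfolding cs.conv_def by blast

lemma ext_good: "\<nu> \<in> extensions \<Sigma> X Y \<mu> \<Longrightarrow> cs.good \<nu>"
  using ext_iff by blast

lemma main:
  "Inf ((\<lambda>\<nu>. measure \<nu> D) ` ergodic_extensions \<Sigma> X Y \<mu>)
       = Inf ((\<lambda>\<nu>. measure \<nu> D) ` extensions \<Sigma> X Y \<mu>)"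
proof (cases "extensions \<Sigma> X Y \<mu> = {}")
  case True
  then have "ergodic_extensions \<Sigma> X Y \<mu> = {}" unfolding ergodic_extensions_def by auto
  then show ?thesis using True by simp
next
  case False
  let ?E = "extensions \<Sigma> X Y \<mu>"
  let ?f = "\<lambda>\<nu>. measure \<nu> D"
  obtain \<nu>0 where \<nu>0: "\<nu>0 \<in> ?E" "\<And>\<nu>. \<nu> \<in> ?E \<Longrightarrow> ?f \<nu>0 \<le> ?f \<nu>"
  proof -
    have "\<exists>\<nu>\<in>?E. \<forall>\<nu>'\<in>?E. ?f \<nu> \<le> ?f \<nu>'"
    proof (rule cs.attains_min[of ?E ?f 0])
      show "?E \<noteq> {}" by fact
      show "\<And>\<nu>. \<nu> \<in> ?E \<Longrightarrow> cs.good \<nu>" by (rule ext_good)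
      show "\<And>s \<nu>. (\<And>n. s n \<in> ?E) \<Longrightarrow> cs.good \<nu> \<Longrightarrow> cs.conv s \<nu> \<Longrightarrow> \<nu> \<in> ?E" by (rule closed_ext)
      show "\<And>s \<nu>. (\<And>n. s n \<in> ?E) \<Longrightarrow> cs.good \<nu> \<Longrightarrow> cs.conv s \<nu> \<Longrightarrow> (\<lambda>n. ?f (s n)) \<longlonglongrightarrow> ?f \<nu>"
        by (rule f_cont)
      show "\<And>\<nu>. \<nu> \<in> ?E \<Longrightarrow> 0 \<le> ?f \<nu>" by simp
    qed
    then show ?thesis using that by blast
  qed
  define c where "c = ?f \<nu>0"
  define K where "K = {\<nu>\<in>?E. ?f \<nu> = c}"
  have cmin: "\<And>\<nu>. \<nu> \<in> ?E \<Longrightarrow> c \<le> ?f \<nu>" using \<nu>0(2) unfolding c_def by blast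
  obtain \<nu>s where \<nu>s: "\<nu>s \<in> K" "\<And>\<nu>. \<nu> \<in> K \<Longrightarrow> - gq \<nu>s \<le> - gq \<nu>"
  proof -
    have "\<exists>\<nu>\<in>K. \<forall>\<nu>'\<in>K. - gq \<nu> \<le> - gq \<nu>'"
    proof (rule cs.attains_min[of K "\<lambda>\<nu>. - gq \<nu>" "-2"])
      show "K \<noteq> {}" using \<nu>0(1) unfolding K_def c_def by blast
      show "\<And>\<nu>. \<nu> \<in> K \<Longrightarrow> cs.good \<nu>" unfolding K_def using ext_good by blast
      fix s \<nu> assume s: "\<And>n. s n \<in> K" and g: "cs.good \<nu>" and cv: "cs.conv s \<nu>"
      have sE: "\<And>n. s n \<in> ?E" using s unfolding K_def by blast
      have "(\<lambda>n. ?f (s n)) \<longlonglongrightarrow> ?f \<nu>" by (rule f_cont[OF cv])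
      moreover have "(\<lambda>n. ?f (s n)) = (\<lambda>n. c)" using s unfolding K_def by auto
      ultimately have "?f \<nu> = c" using LIMSEQ_unique tendsto_const by metis
      then show "\<nu> \<in> K" unfolding K_def using closed_ext[OF sE g cv] by blast
      show "(\<lambda>n. - gq (s n)) \<longlonglongrightarrow> - gq \<nu>"
        by (intro tendsto_minus g_cont[OF _ g cv]) (use sE ext_good in blast)
    next
      fix \<nu> assume "\<nu> \<in> K"
      then show "-2 \<le> - gq \<nu>" using g_le2 ext_good unfolding K_def by force
    qed
    then show ?thesis using that by blast
  qed
  have \<nu>sE: "\<nu>s \<in> ?E" and f\<nu>s: "?f \<nu>s = c" using \<nu>s(1) unfolding K_def by auto
  have g\<nu>s: "cs.good \<nu>s" using ext_good[OF \<nu>sE] .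
  interpret ps: prob_space \<nu>s using g\<nu>s by (simp add: cs.good_def)
  have sp\<nu>s: "space \<nu>s = X \<times> Y" using g\<nu>s by (simp add: cs.good_def)
  have mT: "lshift2 \<in> measurable \<nu>s \<nu>s" by (rule meas_T[OF g\<nu>s])
  have erg: "\<forall>A\<in>sets \<nu>s. lshift2 -` A \<inter> space \<nu>s = A \<longrightarrow> emeasure \<nu>s A = 0 \<or> emeasure \<nu>s A = 1"
  proof (intro ballI impI, rule ccontr)
    fix A assume A: "A \<in> sets \<nu>s" "lshift2 -` A \<inter> space \<nu>s = A"
      and n01: "\<not> (emeasure \<nu>s A = 0 \<or> emeasure \<nu>s A = 1)"
    define Ac where "Ac = space \<nu>s - A"
    have Acs: "Ac \<in> sets \<nu>s" unfolding Ac_def using A(1) by auto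
    have Acinv: "lshift2 -` Ac \<inter> space \<nu>s = Ac"
    proof -
      have "lshift2 x \<in> space \<nu>s" if "x \<in> space \<nu>s" for x using measurable_space[OF mT that] .
      then show ?thesis unfolding Ac_def using A(2) by blast
    qed
    define t where "t = measure \<nu>s A"
    have tA: "emeasure \<nu>s A = ennreal t" unfolding t_def by (simp add: ps.emeasure_eq_measure)
    have t0: "t \<noteq> 0" using n01 tA by auto
    have t1: "t \<noteq> 1" using n01 tA by auto
    have tpos: "0 < t" using t0 unfolding t_def by (simp add: less_le)
    have tlt1: "t < 1" using t1 ps.prob_le_1[of A] unfolding t_def by linarith
    have mAc: "measure \<nu>s Ac = 1 - t" unfolding Ac_def t_def using ps.prob_compl[OF A(1)] .
    have eAc: "emeasure \<nu>s Ac \<noteq> 0" using mAc tlt1 by (simp add: ps.emeasure_eq_measure)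
    have eA: "emeasure \<nu>s A \<noteq> 0" using tA tpos by simp
    define \<nu>1 where "\<nu>1 = uniform_measure \<nu>s A"
    define \<nu>2 where "\<nu>2 = uniform_measure \<nu>s Ac"
    have \<nu>1E: "\<nu>1 \<in> ?E" unfolding \<nu>1_def by (rule cond_ext[OF \<nu>sE A eA])
    have \<nu>2E: "\<nu>2 \<in> ?E" unfolding \<nu>2_def by (rule cond_ext[OF \<nu>sE Acs Acinv eAc])
    have m1: "measure \<nu>1 S = measure \<nu>s (A \<inter> S) / t" if "S \<in> sets \<nu>s" for S
      unfolding \<nu>1_def t_def using eA that by simp
    have m2: "measure \<nu>2 S = measure \<nu>s (Ac \<inter> S) / (1 - t)" if "S \<in> sets \<nu>s" for S
      unfolding \<nu>2_def using eAc that mAc by simp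
    have mix: "measure \<nu>s S = t * measure \<nu>1 S + (1 - t) * measure \<nu>2 S" if S: "S \<in> sets \<nu>s" for S
    proof -
      have "S = (A \<inter> S) \<union> (Ac \<inter> S)" using sets.sets_into_space[OF S] unfolding Ac_def by blast
      then have "measure \<nu>s S = measure \<nu>s (A \<inter> S) + measure \<nu>s (Ac \<inter> S)"
        using ps.finite_measure_Union[of "A \<inter> S" "Ac \<inter> S"] A(1) Acs S unfolding Ac_def by auto
      then show ?thesis using m1[OF S] m2[OF S] tpos tlt1 by simp
    qed
    have Ds: "D \<in> sets \<nu>s" using D_AA AA_sets[OF g\<nu>s] by blast
    have f1: "c \<le> ?f \<nu>1" and f2: "c \<le> ?f \<nu>2" using cmin \<nu>1E \<nu>2E by auto
    have "c = t * ?f \<nu>1 + (1 - t) * ?f \<nu>2" using mix[OF Ds] f\<nu>s by simp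
    then have z: "t * (?f \<nu>1 - c) + (1 - t) * (?f \<nu>2 - c) = 0" by (simp add: algebra_simps)
    have z1: "0 \<le> t * (?f \<nu>1 - c)" using tpos f1 by simp
    have z2: "0 \<le> (1 - t) * (?f \<nu>2 - c)" using tlt1 f2 by simp
    have "t * (?f \<nu>1 - c) = 0" using z z1 z2 by linarith
    then have "?f \<nu>1 = c" using t0 by simp
    then have \<nu>1K: "\<nu>1 \<in> K" unfolding K_def using \<nu>1E by blast
    have "(1 - t) * (?f \<nu>2 - c) = 0" using z z1 z2 by linarith
    then have "?f \<nu>2 = c" using t1 by simp
    then have \<nu>2K: "\<nu>2 \<in> K" unfolding K_def using \<nu>2E by blast
    have g1: "gq \<nu>1 \<le> gq \<nu>s" using \<nu>s(2)[OF \<nu>1K] by simp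
    have g2: "gq \<nu>2 \<le> gq \<nu>s" using \<nu>s(2)[OF \<nu>2K] by simp
    have gd1: "cs.good \<nu>1" using ext_good[OF \<nu>1E] .
    have gd2: "cs.good \<nu>2" using ext_good[OF \<nu>2E] .
    have "\<exists>k. measure \<nu>1 (ee k) \<noteq> measure \<nu>2 (ee k)"
    proof (rule ccontr)
      assume "\<not> (\<exists>k. measure \<nu>1 (ee k) \<noteq> measure \<nu>2 (ee k))"
      then have "\<And>S. S \<in> AA \<Longrightarrow> measure \<nu>1 S = measure \<nu>2 S" using Aee by metis
      then have "\<nu>1 = \<nu>2" by (rule cs.uniq[OF gd1 gd2])
      moreover have "measure \<nu>1 A = 1" using m1[OF A(1)] t0 unfolding t_def by simp
      moreover have "measure \<nu>2 A = 0"
      proof -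
        have "Ac \<inter> A = {}" unfolding Ac_def by blast
        then show ?thesis using m2[OF A(1)] by simp
      qed
      ultimately show False by simp
    qed
    then obtain k0 where k0: "measure \<nu>1 (ee k0) \<noteq> measure \<nu>2 (ee k0)" by blast
    define w where "w k = (1/2::real)^k" for k
    define p where "p k = measure \<nu>1 (ee k)" for k
    define q where "q k = measure \<nu>2 (ee k)" for k
    have ak: "measure \<nu>s (ee k) = t * p k + (1 - t) * q k" for k
      unfolding p_def q_def using mix AA_sets[OF g\<nu>s eeA] by blast
    have s1: "(\<lambda>k. w k * (p k)^2) sums gq \<nu>1" unfolding w_def p_def gq_def using summable_g[OF gd1] by (rule summable_sums)
    have s2: "(\<lambda>k. w k * (q k)^2) sums gq \<nu>2" unfolding w_def q_def gq_def using summable_g[OF gd2] by (rule summable_sums)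
    have s0: "(\<lambda>k. w k * (t * p k + (1 - t) * q k)^2) sums gq \<nu>s"
      unfolding w_def gq_def ak[symmetric] using summable_g[OF g\<nu>s] by (rule summable_sums)
    have "(\<lambda>k. t * (w k * (p k)^2) + (1 - t) * (w k * (q k)^2) - w k * (t * p k + (1 - t) * q k)^2)
        sums (t * gq \<nu>1 + (1 - t) * gq \<nu>2 - gq \<nu>s)"
      by (intro sums_diff sums_add sums_mult s0 s1 s2)
    moreover have "t * (w k * (p k)^2) + (1 - t) * (w k * (q k)^2) - w k * (t * p k + (1 - t) * q k)^2
        = w k * t * (1 - t) * (p k - q k)^2" for k
      by (simp add: power2_eq_square algebra_simps)
    ultimately have r: "(\<lambda>k. w k * t * (1 - t) * (p k - q k)^2) sums (t * gq \<nu>1 + (1 - t) * gq \<nu>2 - gq \<nu>s)"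
      by simp
    have "0 < (\<Sum>k. w k * t * (1 - t) * (p k - q k)^2)"
    proof (rule suminf_pos2[of _ k0])
      show "summable (\<lambda>k. w k * t * (1 - t) * (p k - q k)^2)" using r by (rule sums_summable)
      show "0 \<le> w k * t * (1 - t) * (p k - q k)^2" for k using tpos tlt1 unfolding w_def by simp
      show "0 < w k0 * t * (1 - t) * (p k0 - q k0)^2" using tpos tlt1 k0 unfolding w_def p_def q_def by simp
    qed
    then have lt: "gq \<nu>s < t * gq \<nu>1 + (1 - t) * gq \<nu>2" using sums_unique[OF r] by simp
    have "t * gq \<nu>1 \<le> t * gq \<nu>s" using g1 tpos by simp
    moreover have "(1 - t) * gq \<nu>2 \<le> (1 - t) * gq \<nu>s" using g2 tlt1 by simp
    ultimately have "t * gq \<nu>1 + (1 - t) * gq \<nu>2 \<le> gq \<nu>s" by (simp add: algebra_simps)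
    then show False using lt by simp
  qed
  have \<nu>s_erg: "\<nu>s \<in> ergodic_extensions \<Sigma> X Y \<mu>"
    using \<nu>sE erg unfolding ergodic_extensions_def ergodic_borel_prob_def extensions_def by blast
  have subE: "ergodic_extensions \<Sigma> X Y \<mu> \<subseteq> ?E" unfolding ergodic_extensions_def by blast
  have "Inf (?f ` ergodic_extensions \<Sigma> X Y \<mu>) = c"
    by (rule cInf_eq_minimum) (use \<nu>s_erg f\<nu>s cmin subE in auto)
  moreover have "Inf (?f ` ?E) = c"
    by (rule cInf_eq_minimum) (use \<nu>sE f\<nu>s cmin in auto)
  ultimately show ?thesis by simp
qed

end

theorem proposition23:
  fixes \<Sigma> :: "'a set" and X Y :: "(int \<Rightarrow> 'a) set" and \<mu> :: "(int \<Rightarrow> 'a) measure"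
  assumes "finite \<Sigma>"
    and "shift_space \<Sigma> X" and "shift_space \<Sigma> Y"
    and "ergodic_borel_prob (subtopology (full_shift_top \<Sigma>) Y) lshift \<mu>"
  shows "Inf ((\<lambda>\<nu>. measure \<nu> {(x, y) \<in> X \<times> Y. x 0 \<noteq> y 0}) ` ergodic_extensions \<Sigma> X Y \<mu>)
       = Inf ((\<lambda>\<nu>. measure \<nu> {(x, y) \<in> X \<times> Y. x 0 \<noteq> y 0}) ` extensions \<Sigma> X Y \<mu>)"
proof -
  interpret setting \<Sigma> X Y \<mu> using assms by unfold_locales
  show ?thesis using main unfolding D_def .
qed


end
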